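(* Let $\mathcal W,\mathcal U,\mathcal V$ be finite, $\Phi_W$ and $\Phi_{U|W}$ codebook distributions and $\Phi_{V|W,U}$ a memoryless channel. Let $\mathcal B_1^{(n)}=\{w^n(j)\}_{j\in[2^{nR_1}]}$ have independent entries drawn from $\prod\Phi_W$, and $\mathcal B_2^{(n)}=\{u^n(w^n,k): w^n\in\mathcal B_1^{(n)},k\in[2^{nR_2}]\}$ independent entries with $u^n(w^n,k)\sim\prod_t\Phi_{U|W}(\cdot|w_t)$. With $J$ uniform on $[2^{nR_1}]$ and $K$ uniform on $[2^{nR_2}]$ independent, set $W^n=w^n(J)$, $U^n=u^n(W^n,K)$, and let $V^n$ be the output of $\prod\Phi_{V|W,U}$ on $(W^n,U^n)$, with distribution $P_{V^n}$; let $Q_{V^n}=\prod\Phi_V$ with $\Phi_V=\sum_{w,u}\Phi_W\Phi_{U|W}\Phi_{V|W,U}$. If $R_1>I(W;V)$, $R_2>I(W,U;V)-H(W)$ and $R_1+R_2>I(W,U;V)$, then $\lim_{n\to\infty}\mathbf E\|P_{V^n}-Q_{V^n}\|_{TV}=0$, with exponentially fast convergence in $n$.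
   Context: Information quantities in bits under $\Phi_W\Phi_{U|W}\Phi_{V|W,U}$; expectation over both random codebooks; total variation is half the $\ell_1$ distance. *)

theory Defs
  imports "HOL-Probability.Probability"
begin

text \<open>Entropy and mutual information in bits, for distributions on finite types
  (0 log 0 = 0 convention is automatic since 0 * _ = 0).\<close>

definition entropy_bits :: "'a::finite pmf \<Rightarrow> real" where
  "entropy_bits p = - (\<Sum>x\<in>UNIV. pmf p x * log 2 (pmf p x))"

definition mutual_info_bits :: "('a::finite \<times> 'b::finite) pmf \<Rightarrow> real" where
  "mutual_info_bits p = (\<Sum>xy\<in>UNIV. pmf p xy *
      log 2 (pmf p xy / (pmf (map_pmf fst p) (fst xy) * pmf (map_pmf snd p) (snd xy))))"

definition joint_WUV :: "'w pmf \<Rightarrow> ('w \<Rightarrow> 'u pmf) \<Rightarrow> ('w \<Rightarrow> 'u \<Rightarrow> 'v pmf) \<Rightarrow> ('w \<times> 'u \<times> 'v) pmf" where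
  "joint_WUV PW PUW PV = do { w \<leftarrow> PW; u \<leftarrow> PUW w; v \<leftarrow> PV w u; return_pmf (w, u, v) }"

definition marg_V :: "'w pmf \<Rightarrow> ('w \<Rightarrow> 'u pmf) \<Rightarrow> ('w \<Rightarrow> 'u \<Rightarrow> 'v pmf) \<Rightarrow> 'v pmf" where
  "marg_V PW PUW PV = map_pmf (\<lambda>(w, u, v). v) (joint_WUV PW PUW PV)"

text \<open>Codebook size [2^{nR}] = {0..< ceil(2^{nR})}.\<close>
definition cb_size :: "real \<Rightarrow> nat \<Rightarrow> nat" where
  "cb_size R n = nat \<lceil>2 powr (real n * R)\<rceil>"

text \<open>Length-n sequences are functions on {..<n} (extensional, undefined elsewhere).\<close>
definition seqs :: "nat \<Rightarrow> (nat \<Rightarrow> 'a) set" where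
  "seqs n = PiE {..<n} (\<lambda>_. UNIV)"

definition prod_seq :: "nat \<Rightarrow> (nat \<Rightarrow> 'a pmf) \<Rightarrow> (nat \<Rightarrow> 'a) pmf" where
  "prod_seq n p = Pi_pmf {..<n} undefined p"

definition codebook1_dist :: "'w pmf \<Rightarrow> real \<Rightarrow> nat \<Rightarrow> (nat \<Rightarrow> (nat \<Rightarrow> 'w)) pmf" where
  "codebook1_dist PW R1 n = Pi_pmf {..<cb_size R1 n} undefined (\<lambda>_. prod_seq n (\<lambda>_. PW))"

text \<open>Random codebook B2: (w^n, k) \<mapsto> u^n(w^n,k), independent, u^n(w^n,k) ~ \<prod>_t Phi_{U|W}(.|w_t).
  Entries are drawn for every w^n (only those in B1 are ever used).\<close>
definition codebook2_dist :: "('w::finite \<Rightarrow> 'u pmf) \<Rightarrow> real \<Rightarrow> nat \<Rightarrow> ((nat \<Rightarrow> 'w) \<times> nat \<Rightarrow> (nat \<Rightarrow> 'u)) pmf" where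
  "codebook2_dist PUW R2 n = Pi_pmf (seqs n \<times> {..<cb_size R2 n}) undefined
       (\<lambda>(wn, k). prod_seq n (\<lambda>t. PUW (wn t)))"

definition induced_V :: "('w \<Rightarrow> 'u \<Rightarrow> 'v pmf) \<Rightarrow> real \<Rightarrow> real \<Rightarrow> nat \<Rightarrow>
    (nat \<Rightarrow> (nat \<Rightarrow> 'w)) \<Rightarrow> ((nat \<Rightarrow> 'w) \<times> nat \<Rightarrow> (nat \<Rightarrow> 'u)) \<Rightarrow> (nat \<Rightarrow> 'v) pmf" where
  "induced_V PV R1 R2 n B1 B2 = do {
      J \<leftarrow> pmf_of_set {..<cb_size R1 n};
      K \<leftarrow> pmf_of_set {..<cb_size R2 n};
      let Wseq = B1 J;
      let Useq = B2 (Wseq, K);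
      prod_seq n (\<lambda>t. PV (Wseq t) (Useq t)) }"

definition tv_seq :: "nat \<Rightarrow> (nat \<Rightarrow> 'v::finite) pmf \<Rightarrow> (nat \<Rightarrow> 'v) pmf \<Rightarrow> real" where
  "tv_seq n P Q = (1/2) * (\<Sum>v\<in>seqs n. \<bar>pmf P v - pmf Q v\<bar>)"

definition expected_tv :: "'w::finite pmf \<Rightarrow> ('w \<Rightarrow> 'u pmf) \<Rightarrow> ('w \<Rightarrow> 'u \<Rightarrow> 'v::finite pmf) \<Rightarrow>
    real \<Rightarrow> real \<Rightarrow> nat \<Rightarrow> real" where
  "expected_tv PW PUW PV R1 R2 n =
     measure_pmf.expectation (pair_pmf (codebook1_dist PW R1 n) (codebook2_dist PUW R2 n))
       (\<lambda>(B1, B2). tv_seq n (induced_V PV R1 R2 n B1 B2) (prod_seq n (\<lambda>_. marg_V PW PUW PV)))"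

end

theory Submission
  imports Defs
begin


abbreviation EE :: "'a pmf \<Rightarrow> ('a \<Rightarrow> real) \<Rightarrow> real" where
  "EE p f \<equiv> measure_pmf.expectation p f"

lemma E_fin:
  assumes "finite S" "set_pmf M \<subseteq> S"
  shows "EE M f = (\<Sum>x\<in>S. pmf M x * f x)"
  using assms by (subst integral_measure_pmf_real[of S]) (auto simp: mult.commute)

lemma finite_set_Pi_pmf:
  assumes "finite A" "\<And>i. i \<in> A \<Longrightarrow> finite (set_pmf (p i))"
  shows "finite (set_pmf (Pi_pmf A d p))"
  using assms by (subst set_Pi_pmf) auto

lemma E_bind:
  assumes S: "finite S" "set_pmf M \<subseteq> S" and N: "\<And>x. x \<in> S \<Longrightarrow> finite (set_pmf (N x))"
  shows "EE (bind_pmf M N) f = EE M (\<lambda>x. EE (N x) f)"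
proof -
  define T where "T = (\<Union>x\<in>S. set_pmf (N x))"
  have T: "finite T" using S N by (auto simp: T_def)
  have sub: "set_pmf (bind_pmf M N) \<subseteq> T" using S by (auto simp: T_def)
  have "EE (bind_pmf M N) f = (\<Sum>y\<in>T. pmf (bind_pmf M N) y * f y)"
    by (rule E_fin[OF T sub])
  also have "\<dots> = (\<Sum>y\<in>T. (\<Sum>x\<in>S. pmf M x * pmf (N x) y) * f y)"
    by (intro sum.cong refl, subst pmf_bind, subst E_fin[OF S]) auto
  also have "\<dots> = (\<Sum>y\<in>T. \<Sum>x\<in>S. pmf M x * (pmf (N x) y * f y))"
    by (simp add: sum_distrib_right mult.assoc)
  also have "\<dots> = (\<Sum>x\<in>S. \<Sum>y\<in>T. pmf M x * (pmf (N x) y * f y))"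
    by (rule sum.swap)
  also have "\<dots> = (\<Sum>x\<in>S. pmf M x * (\<Sum>y\<in>T. pmf (N x) y * f y))"
    by (simp add: sum_distrib_left)
  also have "\<dots> = (\<Sum>x\<in>S. pmf M x * EE (N x) f)"
    by (intro sum.cong refl, subst E_fin[OF T]) (auto simp: T_def)
  also have "\<dots> = EE M (\<lambda>x. EE (N x) f)"
    by (rule E_fin[symmetric, OF S])
  finally show ?thesis .
qed

lemma E_sum:
  assumes "finite (set_pmf M)"
  shows "EE M (\<lambda>x. \<Sum>i\<in>I. F i x) = (\<Sum>i\<in>I. EE M (F i))"
  by (rule Bochner_Integration.integral_sum) (use assms in \<open>auto intro: integrable_measure_pmf_finite\<close>)

lemma E_add:
  assumes "finite (set_pmf M)"
  shows "EE M (\<lambda>x. F x + G x) = EE M F + EE M G"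
  by (rule Bochner_Integration.integral_add) (use assms in \<open>auto intro: integrable_measure_pmf_finite\<close>)

lemma E_diff:
  assumes "finite (set_pmf M)"
  shows "EE M (\<lambda>x. F x - G x) = EE M F - EE M G"
  by (rule Bochner_Integration.integral_diff) (use assms in \<open>auto intro: integrable_measure_pmf_finite\<close>)

lemma E_mono:
  assumes "finite (set_pmf M)" "\<And>x. x \<in> set_pmf M \<Longrightarrow> F x \<le> G x"
  shows "EE M F \<le> EE M G"
  using assms by (intro integral_mono_AE) (auto intro: integrable_measure_pmf_finite simp: AE_measure_pmf_iff)

lemma E_nonneg:
  assumes "\<And>x. x \<in> set_pmf M \<Longrightarrow> 0 \<le> F x"
  shows "0 \<le> EE M F"
  using assms by (intro integral_nonneg_AE) (auto simp: AE_measure_pmf_iff)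

lemma E_component:
  assumes "finite A" "i \<in> A"
  shows "EE (Pi_pmf A d p) (\<lambda>f. F (f i)) = EE (p i) F"
proof -
  have "EE (Pi_pmf A d p) (\<lambda>f. F (f i)) = EE (map_pmf (\<lambda>f. f i) (Pi_pmf A d p)) F"
    by simp
  also have "map_pmf (\<lambda>f. f i) (Pi_pmf A d p) = p i"
    using assms by (simp add: Pi_pmf_component)
  finally show ?thesis .
qed

lemma E_two_components:
  fixes F G :: "'b \<Rightarrow> real"
  assumes "finite A" "i \<in> A" "j \<in> A" "i \<noteq> j"
    and fin: "\<And>k. k \<in> A \<Longrightarrow> finite (set_pmf (p k))"
    and nn: "\<And>x. 0 \<le> F x" "\<And>x. 0 \<le> G x"
  shows "EE (Pi_pmf A d p) (\<lambda>f. F (f i) * G (f j)) = EE (p i) F * EE (p j) G"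
proof -
  define H where "H = (\<lambda>k. if k = i then F else if k = j then G else (\<lambda>_. 1::real))"
  have prodeq: "(\<Prod>k\<in>A. H k (f k)) = F (f i) * G (f j)" for f
  proof -
    have "(\<Prod>k\<in>A. H k (f k)) = H i (f i) * (\<Prod>k\<in>A-{i}. H k (f k))"
      using assms by (simp add: prod.remove)
    also have "(\<Prod>k\<in>A-{i}. H k (f k)) = H j (f j) * (\<Prod>k\<in>A-{i}-{j}. H k (f k))"
      using assms by (subst prod.remove) auto
    also have "(\<Prod>k\<in>A-{i}-{j}. H k (f k)) = 1"
      by (intro prod.neutral) (auto simp: H_def)
    finally show ?thesis using assms by (simp add: H_def)
  qed
  have "EE (Pi_pmf A d p) (\<lambda>f. F (f i) * G (f j)) = EE (Pi_pmf A d p) (\<lambda>f. \<Prod>k\<in>A. H k (f k))"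
    by (simp only: prodeq)
  also have "\<dots> = (\<Prod>k\<in>A. EE (p k) (H k))"
    using assms by (intro expectation_prod_Pi_pmf) (auto simp: H_def intro: integrable_measure_pmf_finite)
  also have "(\<Prod>k\<in>A. EE (p k) (H k)) = EE (p i) (H i) * (\<Prod>k\<in>A-{i}. EE (p k) (H k))"
    using assms by (simp add: prod.remove)
  also have "(\<Prod>k\<in>A-{i}. EE (p k) (H k)) = EE (p j) (H j) * (\<Prod>k\<in>A-{i}-{j}. EE (p k) (H k))"
    using assms by (subst prod.remove) auto
  also have "(\<Prod>k\<in>A-{i}-{j}. EE (p k) (H k)) = 1"
    by (intro prod.neutral) (auto simp: H_def)
  finally show ?thesis using assms by (simp add: H_def)
qed

lemma E_sum_sq_Pi:
  fixes F :: "'i \<Rightarrow> 'b \<Rightarrow> real"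
  assumes A: "finite A" and fin: "\<And>k. k \<in> A \<Longrightarrow> finite (set_pmf (p k))"
    and nn: "\<And>k x. 0 \<le> F k x"
  shows "EE (Pi_pmf A d p) (\<lambda>f. (\<Sum>i\<in>A. F i (f i))^2) =
     (\<Sum>i\<in>A. EE (p i) (F i))^2 + (\<Sum>i\<in>A. EE (p i) (\<lambda>x. (F i x)^2) - (EE (p i) (F i))^2)"
proof -
  let ?M = "Pi_pmf A d p"
  have finM: "finite (set_pmf ?M)" using A fin by (rule finite_set_Pi_pmf)
  have "EE ?M (\<lambda>f. (\<Sum>i\<in>A. F i (f i))^2) = EE ?M (\<lambda>f. \<Sum>i\<in>A. \<Sum>j\<in>A. F i (f i) * F j (f j))"
    by (simp add: power2_eq_square sum_product)
  also have "\<dots> = (\<Sum>i\<in>A. \<Sum>j\<in>A. EE ?M (\<lambda>f. F i (f i) * F j (f j)))"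
    using finM by (simp add: E_sum)
  also have "\<dots> = (\<Sum>i\<in>A. \<Sum>j\<in>A. if i = j then EE (p i) (\<lambda>x. (F i x)^2) else EE (p i) (F i) * EE (p j) (F j))"
  proof (intro sum.cong refl)
    fix i j assume ij: "i \<in> A" "j \<in> A"
    show "EE ?M (\<lambda>f. F i (f i) * F j (f j)) = (if i = j then EE (p i) (\<lambda>x. (F i x)^2) else EE (p i) (F i) * EE (p j) (F j))"
    proof (cases "i = j")
      case True
      then show ?thesis using E_component[OF A ij(1), of d p "\<lambda>x. (F i x)^2"] by (simp add: power2_eq_square)
    next
      case False
      then show ?thesis using E_two_components[OF A ij False fin nn nn] by simp
    qed
  qed
  also have "\<dots> = (\<Sum>i\<in>A. EE (p i) (F i))^2 + (\<Sum>i\<in>A. EE (p i) (\<lambda>x. (F i x)^2) - (EE (p i) (F i))^2)"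
  proof -
    have "\<And>i. i \<in> A \<Longrightarrow> (\<Sum>j\<in>A. if i = j then EE (p i) (\<lambda>x. (F i x)^2) else EE (p i) (F i) * EE (p j) (F j))
       = (\<Sum>j\<in>A. EE (p i) (F i) * EE (p j) (F j)) + (EE (p i) (\<lambda>x. (F i x)^2) - (EE (p i) (F i))^2)"
    proof -
      fix i assume i: "i \<in> A"
      have "(\<Sum>j\<in>A. if i = j then EE (p i) (\<lambda>x. (F i x)^2) else EE (p i) (F i) * EE (p j) (F j))
        = (\<Sum>j\<in>A. EE (p i) (F i) * EE (p j) (F j) + (if i = j then EE (p i) (\<lambda>x. (F i x)^2) - (EE (p i) (F i))^2 else 0))"
        by (intro sum.cong refl) (auto simp: power2_eq_square)
      also have "\<dots> = (\<Sum>j\<in>A. EE (p i) (F i) * EE (p j) (F j)) + (EE (p i) (\<lambda>x. (F i x)^2) - (EE (p i) (F i))^2)"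
        using A i by (simp add: sum.distrib)
      finally show "?thesis i" .
    qed
    then have "(\<Sum>i\<in>A. \<Sum>j\<in>A. if i = j then EE (p i) (\<lambda>x. (F i x)^2) else EE (p i) (F i) * EE (p j) (F j))
       = (\<Sum>i\<in>A. (\<Sum>j\<in>A. EE (p i) (F i) * EE (p j) (F j)) + (EE (p i) (\<lambda>x. (F i x)^2) - (EE (p i) (F i))^2))"
      by (intro sum.cong) auto
    also have "\<dots> = (\<Sum>i\<in>A. EE (p i) (F i))^2 + (\<Sum>i\<in>A. EE (p i) (\<lambda>x. (F i x)^2) - (EE (p i) (F i))^2)"
      by (simp add: sum.distrib power2_eq_square sum_product)
    finally show ?thesis .
  qed
  finally show ?thesis .
qed

lemma E_sum_Pi:
  assumes A: "finite A" and fin: "\<And>k. k \<in> A \<Longrightarrow> finite (set_pmf (p k))"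
  shows "EE (Pi_pmf A d p) (\<lambda>f. \<Sum>i\<in>A. F i (f i)) = (\<Sum>i\<in>A. EE (p i) (F i))"
proof -
  have finM: "finite (set_pmf (Pi_pmf A d p))" using A fin by (rule finite_set_Pi_pmf)
  show ?thesis using finM by (simp add: E_sum E_component[OF A])
qed

lemma Var_sum_Pi:
  fixes F :: "'i \<Rightarrow> 'b \<Rightarrow> real"
  assumes A: "finite A" and fin: "\<And>k. k \<in> A \<Longrightarrow> finite (set_pmf (p k))"
    and nn: "\<And>k x. 0 \<le> F k x"
  shows "EE (Pi_pmf A d p) (\<lambda>f. ((\<Sum>i\<in>A. F i (f i)) - (\<Sum>i\<in>A. EE (p i) (F i)))^2) \<le>
     (\<Sum>i\<in>A. EE (p i) (\<lambda>x. (F i x)^2))"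
proof -
  let ?M = "Pi_pmf A d p"
  let ?m = "\<Sum>i\<in>A. EE (p i) (F i)"
  have finM: "finite (set_pmf ?M)" using A fin by (rule finite_set_Pi_pmf)
  have "EE ?M (\<lambda>f. ((\<Sum>i\<in>A. F i (f i)) - ?m)^2) =
        EE ?M (\<lambda>f. (\<Sum>i\<in>A. F i (f i))^2 - 2 * ?m * (\<Sum>i\<in>A. F i (f i)) + ?m^2)"
    by (simp add: power2_diff algebra_simps)
  also have "\<dots> = EE ?M (\<lambda>f. (\<Sum>i\<in>A. F i (f i))^2) - 2 * ?m * EE ?M (\<lambda>f. \<Sum>i\<in>A. F i (f i)) + ?m^2"
    using finM by (simp add: E_add E_diff)
  also have "\<dots> = (\<Sum>i\<in>A. EE (p i) (\<lambda>x. (F i x)^2) - (EE (p i) (F i))^2)"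
  proof -
    have e1: "EE ?M (\<lambda>f. \<Sum>i\<in>A. F i (f i)) = ?m" by (rule E_sum_Pi[OF A fin])
    have e2: "EE ?M (\<lambda>f. (\<Sum>i\<in>A. F i (f i))^2) = ?m^2 + (\<Sum>i\<in>A. EE (p i) (\<lambda>x. (F i x)^2) - (EE (p i) (F i))^2)"
      by (rule E_sum_sq_Pi[OF A fin nn])
    show ?thesis unfolding e1 e2 by (simp add: power2_eq_square)
  qed
  also have "\<dots> \<le> (\<Sum>i\<in>A. EE (p i) (\<lambda>x. (F i x)^2))"
    by (intro sum_mono) auto
  finally show ?thesis .
qed



lemma regroup:
  fixes G :: "'a \<Rightarrow> real"
  assumes "finite Sa" "finite J" "\<And>j. j \<in> J \<Longrightarrow> B1 j \<in> Sa"
  shows "(\<Sum>j\<in>J. G (B1 j)) = (\<Sum>w\<in>Sa. (\<Sum>j\<in>J. if B1 j = w then 1 else 0) * G w)"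
proof -
  have "(\<Sum>j\<in>J. G (B1 j)) = (\<Sum>j\<in>J. \<Sum>w\<in>Sa. (if B1 j = w then 1 else 0) * G w)"
  proof (intro sum.cong refl)
    fix j assume "j \<in> J"
    then have "B1 j \<in> Sa" using assms by auto
    then have "(\<Sum>w\<in>Sa. (if B1 j = w then 1 else 0) * G w) = (\<Sum>w\<in>Sa. if B1 j = w then G w else 0)"
      by (intro sum.cong) auto
    also have "\<dots> = G (B1 j)" using \<open>B1 j \<in> Sa\<close> assms(1) by (simp add: sum.delta)
    finally show "G (B1 j) = (\<Sum>w\<in>Sa. (if B1 j = w then 1 else 0) * G w)" by simp
  qed
  also have "\<dots> = (\<Sum>w\<in>Sa. \<Sum>j\<in>J. (if B1 j = w then 1 else 0) * G w)"
    by (rule sum.swap)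
  also have "\<dots> = (\<Sum>w\<in>Sa. (\<Sum>j\<in>J. if B1 j = w then 1 else 0) * G w)"
    by (simp add: sum_distrib_right)
  finally show ?thesis .
qed

lemma sum_fst_prod:
  fixes G :: "'a \<Rightarrow> real" and N :: nat
  assumes "finite A"
  shows "(\<Sum>i\<in>A \<times> {..<N}. G (fst i)) = real N * (\<Sum>w\<in>A. G w)"
proof -
  have "(\<Sum>i\<in>A \<times> {..<N}. G (fst i)) = (\<Sum>w\<in>A. \<Sum>k<N. G (fst (w,k)))"
    by (subst sum.Sigma) (auto simp: split_beta' assms)
  then show ?thesis by (simp add: sum_distrib_left)
qed

lemma E_pair:
  assumes "finite (set_pmf M1)" "finite (set_pmf M2)"
  shows "EE (pair_pmf M1 M2) (\<lambda>(x,y). F x y) = EE M1 (\<lambda>x. EE M2 (\<lambda>y. F x y))"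
proof -
  have "EE (pair_pmf M1 M2) (\<lambda>(x,y). F x y) = EE M1 (\<lambda>x. EE (bind_pmf M2 (\<lambda>y. return_pmf (x, y))) (\<lambda>(x,y). F x y))"
    unfolding pair_pmf_def using assms by (intro E_bind) auto
  also have "\<dots> = EE M1 (\<lambda>x. EE M2 (\<lambda>y. F x y))"
    using assms by (intro Bochner_Integration.integral_cong refl, subst E_bind) auto
  finally show ?thesis .
qed

lemma E_abs_sq:
  assumes "finite (set_pmf M)"
  shows "(EE M (\<lambda>x. \<bar>F x\<bar>))^2 \<le> EE M (\<lambda>x. (F x)^2)"
proof -
  define c where "c = EE M (\<lambda>x. \<bar>F x\<bar>)"
  have "0 \<le> EE M (\<lambda>x. (\<bar>F x\<bar> - c)^2)" by (rule E_nonneg) auto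
  also have "EE M (\<lambda>x. (\<bar>F x\<bar> - c)^2) = EE M (\<lambda>x. (F x)^2 - 2 * c * \<bar>F x\<bar> + c^2)"
    by (intro Bochner_Integration.integral_cong refl) (simp add: power2_diff)
  also have "\<dots> = EE M (\<lambda>x. (F x)^2) - 2 * c * c + c^2"
    using assms by (simp add: E_add E_diff c_def)
  finally show ?thesis by (simp add: c_def power2_eq_square)
qed

lemma var_B2:
  fixes h :: "'a \<Rightarrow> 'b \<Rightarrow> real" and q :: "'a \<Rightarrow> 'b pmf" and N1 N2 :: nat and d2 :: 'b
  assumes Sa: "finite Sa" and B1: "\<And>j. j < N1 \<Longrightarrow> B1 j \<in> Sa"
    and finq: "\<And>w. finite (set_pmf (q w))" and hnn: "\<And>w u. 0 \<le> h w u"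
  defines "M2 \<equiv> Pi_pmf (Sa \<times> {..<N2}) d2 (\<lambda>(w,k). q w)"
  defines "S \<equiv> (\<lambda>B2. \<Sum>j<N1. \<Sum>k<N2. h (B1 j) (B2 (B1 j, k)))"
  defines "cnt \<equiv> (\<lambda>w. \<Sum>j<N1. if B1 j = w then 1 else 0::real)"
  shows "EE M2 S = real N2 * (\<Sum>j<N1. EE (q (B1 j)) (h (B1 j)))"
    and "EE M2 (\<lambda>B2. (S B2 - real N2 * (\<Sum>j<N1. EE (q (B1 j)) (h (B1 j))))^2)
          \<le> real N2 * (\<Sum>w\<in>Sa. (cnt w)^2 * EE (q w) (\<lambda>u. (h w u)^2))"
proof -
  let ?I = "Sa \<times> {..<N2}"
  have I: "finite ?I" using Sa by auto
  have finp: "\<And>i. i \<in> ?I \<Longrightarrow> finite (set_pmf ((\<lambda>(w,k). q w) i))" using finq by auto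
  define F where "F = (\<lambda>(i::'a \<times> nat) u. cnt (fst i) * h (fst i) u)"
  have Fnn: "\<And>i u. 0 \<le> F i u" using hnn by (auto simp: F_def cnt_def intro!: mult_nonneg_nonneg sum_nonneg)
  have S_eq: "S B2 = (\<Sum>i\<in>?I. F i (B2 i))" for B2
  proof -
    have "S B2 = (\<Sum>w\<in>Sa. cnt w * (\<Sum>k<N2. h w (B2 (w, k))))"
      unfolding S_def cnt_def by (rule regroup) (use Sa B1 in auto)
    also have "\<dots> = (\<Sum>w\<in>Sa. \<Sum>k<N2. F (w,k) (B2 (w,k)))"
      by (simp add: F_def sum_distrib_left)
    also have "\<dots> = (\<Sum>i\<in>?I. F i (B2 i))"
      by (simp add: sum.cartesian_product)
    finally show ?thesis .
  qed
  have mean_eq: "(\<Sum>i\<in>?I. EE ((\<lambda>(w,k). q w) i) (F i)) = real N2 * (\<Sum>j<N1. EE (q (B1 j)) (h (B1 j)))"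
  proof -
    have "(\<Sum>i\<in>?I. EE ((\<lambda>(w,k). q w) i) (F i)) = (\<Sum>w\<in>Sa. \<Sum>k<N2. EE (q w) (F (w,k)))"
      by (simp add: sum.cartesian_product split_beta)
    also have "\<dots> = (\<Sum>w\<in>Sa. real N2 * (cnt w * EE (q w) (h w)))"
      by (simp add: F_def)
    also have "\<dots> = real N2 * (\<Sum>w\<in>Sa. cnt w * EE (q w) (h w))"
      by (simp add: sum_distrib_left)
    also have "(\<Sum>w\<in>Sa. cnt w * EE (q w) (h w)) = (\<Sum>j<N1. EE (q (B1 j)) (h (B1 j)))"
      unfolding cnt_def by (rule regroup[symmetric]) (use Sa B1 in auto)
    finally show ?thesis .
  qed
  show "EE M2 S = real N2 * (\<Sum>j<N1. EE (q (B1 j)) (h (B1 j)))"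
    unfolding M2_def S_eq mean_eq[symmetric] by (rule E_sum_Pi[OF I finp])
  have "EE M2 (\<lambda>B2. (S B2 - real N2 * (\<Sum>j<N1. EE (q (B1 j)) (h (B1 j))))^2)
      = EE M2 (\<lambda>B2. ((\<Sum>i\<in>?I. F i (B2 i)) - (\<Sum>i\<in>?I. EE ((\<lambda>(w,k). q w) i) (F i)))^2)"
    by (simp only: S_eq mean_eq)
  also have "\<dots> \<le> (\<Sum>i\<in>?I. EE ((\<lambda>(w,k). q w) i) (\<lambda>x. (F i x)^2))"
    unfolding M2_def by (rule Var_sum_Pi[OF I finp Fnn])
  also have "\<dots> = (\<Sum>i\<in>?I. (cnt (fst i))^2 * EE (q (fst i)) (\<lambda>u. (h (fst i) u)^2))"
    by (simp add: F_def power_mult_distrib split_beta)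
  also have "\<dots> = real N2 * (\<Sum>w\<in>Sa. (cnt w)^2 * EE (q w) (\<lambda>u. (h w u)^2))"
    by (rule sum_fst_prod[OF Sa])
  finally show "EE M2 (\<lambda>B2. (S B2 - real N2 * (\<Sum>j<N1. EE (q (B1 j)) (h (B1 j))))^2)
          \<le> real N2 * (\<Sum>w\<in>Sa. (cnt w)^2 * EE (q w) (\<lambda>u. (h w u)^2))" .
qed



lemma E_sq_shift:
  assumes "finite (set_pmf M)" "EE M X = Z"
  shows "EE M (\<lambda>x. (X x - K)^2) = EE M (\<lambda>x. (X x - Z)^2) + (Z - K)^2"
proof -
  have 1: "EE M (\<lambda>x. (X x - K)^2) = EE M (\<lambda>x. (X x)^2 - 2 * K * X x + K^2)"
    by (intro Bochner_Integration.integral_cong refl) (simp add: power2_diff algebra_simps)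
  have 2: "EE M (\<lambda>x. (X x)^2 - 2 * K * X x + K^2) = EE M (\<lambda>x. (X x)^2) - 2 * K * Z + K^2"
    using assms by (simp add: E_add E_diff)
  have 3: "EE M (\<lambda>x. (X x - Z)^2) = EE M (\<lambda>x. (X x)^2 - 2 * Z * X x + Z^2)"
    by (intro Bochner_Integration.integral_cong refl) (simp add: power2_diff algebra_simps)
  have 4: "EE M (\<lambda>x. (X x)^2 - 2 * Z * X x + Z^2) = EE M (\<lambda>x. (X x)^2) - 2 * Z * Z + Z^2"
    using assms by (simp add: E_add E_diff)
  show ?thesis unfolding 1 2 3 4 by (simp add: power2_eq_square algebra_simps)
qed

lemma E_indicator:
  assumes "finite Sa" "set_pmf p \<subseteq> Sa" "w \<in> Sa"
  shows "EE p (\<lambda>x. if x = w then 1 else 0) = pmf p w"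
  using assms by (subst E_fin[OF assms(1,2)]) (simp add: if_distrib sum.delta cong: if_cong)

lemma var_total:
  fixes h :: "'a \<Rightarrow> 'b \<Rightarrow> real" and q :: "'a \<Rightarrow> 'b pmf" and p :: "'a pmf"
    and N1 N2 :: nat and d1 :: 'a and d2 :: 'b
  assumes Sa: "finite Sa" "set_pmf p \<subseteq> Sa"
    and finq: "\<And>w. finite (set_pmf (q w))" and hnn: "\<And>w u. 0 \<le> h w u"
  defines "M1 \<equiv> Pi_pmf {..<N1} d1 (\<lambda>_. p)"
  defines "M2 \<equiv> Pi_pmf (Sa \<times> {..<N2}) d2 (\<lambda>(w,k). q w)"
  defines "S \<equiv> (\<lambda>B1 B2. \<Sum>j<N1. \<Sum>k<N2. h (B1 j) (B2 (B1 j, k)))"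
  defines "m \<equiv> EE p (\<lambda>w. EE (q w) (h w))"
  shows "EE M1 (\<lambda>B1. EE M2 (S B1)) = real N1 * real N2 * m"
    and "EE M1 (\<lambda>B1. EE M2 (\<lambda>B2. (S B1 B2 - real N1 * real N2 * m)^2)) \<le>
      real N2 * real N1 * EE p (\<lambda>w. EE (q w) (\<lambda>u. (h w u)^2))
    + real N2 * (real N1)^2 * EE p (\<lambda>w. pmf p w * EE (q w) (\<lambda>u. (h w u)^2))
    + (real N2)^2 * real N1 * EE p (\<lambda>w. (EE (q w) (h w))^2)"
proof -
  have finp: "finite (set_pmf p)" using Sa finite_subset by blast
  have finM1: "finite (set_pmf M1)" unfolding M1_def by (rule finite_set_Pi_pmf) (use finp in auto)
  have finM2: "finite (set_pmf M2)" unfolding M2_def by (rule finite_set_Pi_pmf) (use Sa finq in auto)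
  have B1sup: "B1 j \<in> Sa" if "B1 \<in> set_pmf M1" "j < N1" for B1 j
  proof -
    have "B1 \<in> PiE_dflt {..<N1} d1 (set_pmf \<circ> (\<lambda>_. p))"
      using that unfolding M1_def by (simp add: set_Pi_pmf)
    then have "B1 j \<in> set_pmf p" using that by (auto simp: PiE_dflt_def)
    then show ?thesis using Sa by auto
  qed
  define g where "g = (\<lambda>w. EE (q w) (h w))"
  define e where "e = (\<lambda>w. EE (q w) (\<lambda>u. (h w u)^2))"
  define cnt where "cnt = (\<lambda>(B1::nat\<Rightarrow>'a) w. \<Sum>j<N1. if B1 j = w then 1 else 0::real)"
  have gnn: "0 \<le> g w" for w unfolding g_def by (rule E_nonneg) (use hnn in auto)
  have ES: "EE M2 (S B1) = real N2 * (\<Sum>j<N1. g (B1 j))" if "B1 \<in> set_pmf M1" for B1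
    unfolding M2_def S_def g_def by (rule var_B2(1)[OF Sa(1) B1sup[OF that] finq hnn])
  have VS: "EE M2 (\<lambda>B2. (S B1 B2 - real N2 * (\<Sum>j<N1. g (B1 j)))^2) \<le> real N2 * (\<Sum>w\<in>Sa. (cnt B1 w)^2 * e w)"
    if "B1 \<in> set_pmf M1" for B1
    unfolding M2_def S_def g_def e_def cnt_def by (rule var_B2(2)[OF Sa(1) B1sup[OF that] finq hnn])
  have Eg: "EE M1 (\<lambda>B1. \<Sum>j<N1. g (B1 j)) = real N1 * m"
    unfolding M1_def by (subst E_sum_Pi) (auto simp: finp m_def g_def)
  show "EE M1 (\<lambda>B1. EE M2 (S B1)) = real N1 * real N2 * m"
  proof -
    have "EE M1 (\<lambda>B1. EE M2 (S B1)) = EE M1 (\<lambda>B1. real N2 * (\<Sum>j<N1. g (B1 j)))"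
      by (intro integral_cong_AE) (auto simp: AE_measure_pmf_iff ES)
    also have "\<dots> = real N2 * (real N1 * m)" by (simp add: Eg)
    finally show ?thesis by simp
  qed
  have Ecnt: "EE M1 (\<lambda>B1. (cnt B1 w)^2) \<le> (real N1)^2 * (pmf p w)^2 + real N1 * pmf p w" if w: "w \<in> Sa" for w
  proof -
    have "EE M1 (\<lambda>B1. (cnt B1 w)^2) = (\<Sum>j<N1. EE p (\<lambda>x. if x = w then 1 else 0))^2 +
        (\<Sum>j<N1. EE p (\<lambda>x. (if x = w then 1 else 0)^2) - (EE p (\<lambda>x. if x = w then 1 else 0))^2)"
      unfolding M1_def cnt_def
      by (rule E_sum_sq_Pi[where F = "\<lambda>j x. if x = w then 1 else 0"]) (auto simp: finp)
    also have "\<dots> = (real N1 * pmf p w)^2 + real N1 * (pmf p w - (pmf p w)^2)"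
    proof -
      have "(\<lambda>x. (if x = w then 1 else 0::real)^2) = (\<lambda>x. if x = w then 1 else 0)" by auto
      then show ?thesis using E_indicator[OF Sa w] by simp
    qed
    also have "\<dots> \<le> (real N1)^2 * (pmf p w)^2 + real N1 * pmf p w"
      by (simp add: power_mult_distrib algebra_simps)
    finally show ?thesis .
  qed
  have enn: "0 \<le> e w" for w unfolding e_def by (rule E_nonneg) auto
  have part1: "EE M1 (\<lambda>B1. \<Sum>w\<in>Sa. (cnt B1 w)^2 * e w) \<le>
      real N1 * EE p e + (real N1)^2 * EE p (\<lambda>w. pmf p w * e w)"
  proof -
    have "EE M1 (\<lambda>B1. \<Sum>w\<in>Sa. (cnt B1 w)^2 * e w) = (\<Sum>w\<in>Sa. EE M1 (\<lambda>B1. (cnt B1 w)^2) * e w)"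
      using finM1 by (simp add: E_sum)
    also have "\<dots> \<le> (\<Sum>w\<in>Sa. ((real N1)^2 * (pmf p w)^2 + real N1 * pmf p w) * e w)"
      by (intro sum_mono mult_right_mono Ecnt enn)
    also have "\<dots> = real N1 * (\<Sum>w\<in>Sa. pmf p w * e w) + (real N1)^2 * (\<Sum>w\<in>Sa. pmf p w * (pmf p w * e w))"
      by (simp add: sum_distrib_left sum.distrib algebra_simps power2_eq_square)
    also have "\<dots> = real N1 * EE p e + (real N1)^2 * EE p (\<lambda>w. pmf p w * e w)"
      by (simp add: E_fin[OF Sa])
    finally show ?thesis .
  qed
  have part2: "EE M1 (\<lambda>B1. (real N2 * (\<Sum>j<N1. g (B1 j)) - real N1 * real N2 * m)^2) \<le>
      (real N2)^2 * real N1 * EE p (\<lambda>w. (g w)^2)"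
  proof -
    have "EE M1 (\<lambda>B1. (real N2 * (\<Sum>j<N1. g (B1 j)) - real N1 * real N2 * m)^2) =
        EE M1 (\<lambda>B1. (real N2)^2 * ((\<Sum>j<N1. g (B1 j)) - (\<Sum>j<N1. EE p g))^2)"
      by (intro Bochner_Integration.integral_cong refl) (simp add: m_def g_def power2_eq_square algebra_simps)
    also have "\<dots> = (real N2)^2 * EE M1 (\<lambda>B1. ((\<Sum>j<N1. g (B1 j)) - (\<Sum>j<N1. EE p g))^2)"
      by simp
    also have "EE M1 (\<lambda>B1. ((\<Sum>j<N1. g (B1 j)) - (\<Sum>j<N1. EE p g))^2) \<le> (\<Sum>j<N1. EE p (\<lambda>x. (g x)^2))"
      unfolding M1_def by (rule Var_sum_Pi[where F = "\<lambda>j. g"]) (auto simp: finp gnn)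
    finally show ?thesis by (simp add: mult_left_mono)
  qed
  have "EE M1 (\<lambda>B1. EE M2 (\<lambda>B2. (S B1 B2 - real N1 * real N2 * m)^2)) \<le>
     EE M1 (\<lambda>B1. real N2 * (\<Sum>w\<in>Sa. (cnt B1 w)^2 * e w) + (real N2 * (\<Sum>j<N1. g (B1 j)) - real N1 * real N2 * m)^2)"
  proof (rule E_mono[OF finM1])
    fix B1 assume B1: "B1 \<in> set_pmf M1"
    have "EE M2 (\<lambda>B2. (S B1 B2 - real N1 * real N2 * m)^2) =
      EE M2 (\<lambda>B2. (S B1 B2 - real N2 * (\<Sum>j<N1. g (B1 j)))^2) + (real N2 * (\<Sum>j<N1. g (B1 j)) - real N1 * real N2 * m)^2"
      by (rule E_sq_shift[OF finM2 ES[OF B1]])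
    then show "EE M2 (\<lambda>B2. (S B1 B2 - real N1 * real N2 * m)^2) \<le>
      real N2 * (\<Sum>w\<in>Sa. (cnt B1 w)^2 * e w) + (real N2 * (\<Sum>j<N1. g (B1 j)) - real N1 * real N2 * m)^2"
      using VS[OF B1] by simp
  qed
  also have "\<dots> = real N2 * EE M1 (\<lambda>B1. \<Sum>w\<in>Sa. (cnt B1 w)^2 * e w) +
      EE M1 (\<lambda>B1. (real N2 * (\<Sum>j<N1. g (B1 j)) - real N1 * real N2 * m)^2)"
    using finM1 by (simp add: E_add)
  also have "\<dots> \<le> real N2 * (real N1 * EE p e + (real N1)^2 * EE p (\<lambda>w. pmf p w * e w)) +
      (real N2)^2 * real N1 * EE p (\<lambda>w. (g w)^2)"
    by (intro add_mono mult_left_mono part1 part2) auto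
  finally show "EE M1 (\<lambda>B1. EE M2 (\<lambda>B2. (S B1 B2 - real N1 * real N2 * m)^2)) \<le>
      real N2 * real N1 * EE p (\<lambda>w. EE (q w) (\<lambda>u. (h w u)^2))
    + real N2 * (real N1)^2 * EE p (\<lambda>w. pmf p w * EE (q w) (\<lambda>u. (h w u)^2))
    + (real N2)^2 * real N1 * EE p (\<lambda>w. (EE (q w) (h w))^2)"
    by (simp add: e_def g_def algebra_simps)
qed



lemma sqrt_sum_CS:
  fixes a b :: "'i \<Rightarrow> real"
  assumes "\<And>i. i \<in> I \<Longrightarrow> 0 \<le> a i" "\<And>i. i \<in> I \<Longrightarrow> 0 \<le> b i"
  shows "(\<Sum>i\<in>I. sqrt (a i * b i)) \<le> sqrt (\<Sum>i\<in>I. a i) * sqrt (\<Sum>i\<in>I. b i)"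
proof -
  have sa: "0 \<le> sum a I" and sb: "0 \<le> sum b I" using assms by (auto intro: sum_nonneg)
  have "(\<Sum>i\<in>I. sqrt (a i) * sqrt (b i))^2 \<le> (\<Sum>i\<in>I. (sqrt (a i))^2) * (\<Sum>i\<in>I. (sqrt (b i))^2)"
    by (rule Cauchy_Schwarz_ineq_sum)
  also have "\<dots> = (\<Sum>i\<in>I. a i) * (\<Sum>i\<in>I. b i)"
    using assms by simp
  also have "\<dots> = (sqrt (\<Sum>i\<in>I. a i) * sqrt (\<Sum>i\<in>I. b i))^2"
    using sa sb by (simp add: power_mult_distrib)
  finally have "(\<Sum>i\<in>I. sqrt (a i) * sqrt (b i)) \<le> sqrt (\<Sum>i\<in>I. a i) * sqrt (\<Sum>i\<in>I. b i)"
    by (rule power2_le_imp_le) (use sa sb in auto)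
  then show ?thesis by (simp add: real_sqrt_mult)
qed

lemma one_shot_v:
  fixes p :: "'a pmf" and q :: "'a \<Rightarrow> 'b pmf" and h :: "'a \<Rightarrow> 'b \<Rightarrow> real"
    and N1 N2 :: nat and d1 :: 'a and d2 :: 'b
  assumes Sa: "finite Sa" "set_pmf p \<subseteq> Sa"
    and finq: "\<And>w. finite (set_pmf (q w))" and hnn: "\<And>w u. 0 \<le> h w u"
    and N: "N1 > 0" "N2 > 0"
    and Kc: "0 \<le> K" and m_def: "m = EE p (\<lambda>w. EE (q w) (h w))"
    and ha: "EE p (\<lambda>w. EE (q w) (\<lambda>u. (h w u)^2)) \<le> Ka * m"
    and hb: "EE p (\<lambda>w. (EE (q w) (h w))^2) \<le> Kb * m"
    and hc: "EE p (\<lambda>w. pmf p w * EE (q w) (\<lambda>u. (h w u)^2)) \<le> Kc * m"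
    and KK: "Ka / (real N1 * real N2) + Kb / real N1 + Kc / real N2 \<le> K * Qv"
  defines "M1 \<equiv> Pi_pmf {..<N1} d1 (\<lambda>_. p)"
  defines "M2 \<equiv> Pi_pmf (Sa \<times> {..<N2}) d2 (\<lambda>(w,k). q w)"
  defines "S \<equiv> (\<lambda>B1 B2. \<Sum>j<N1. \<Sum>k<N2. h (B1 j) (B2 (B1 j, k)))"
  shows "EE (pair_pmf M1 M2) (\<lambda>(B1,B2). \<bar>S B1 B2 / (real N1 * real N2) - m\<bar>) \<le> sqrt (K * Qv * m)"
proof -
  have finp: "finite (set_pmf p)" using Sa finite_subset by blast
  have finM1: "finite (set_pmf M1)" unfolding M1_def by (rule finite_set_Pi_pmf) (use finp in auto)
  have finM2: "finite (set_pmf M2)" unfolding M2_def by (rule finite_set_Pi_pmf) (use Sa finq in auto)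
  have finP: "finite (set_pmf (pair_pmf M1 M2))" using finM1 finM2 by simp
  let ?X = "\<lambda>(B1,B2). S B1 B2 / (real N1 * real N2) - m"
  have "(EE (pair_pmf M1 M2) (\<lambda>x. \<bar>?X x\<bar>))^2 \<le> EE (pair_pmf M1 M2) (\<lambda>x. (?X x)^2)"
    by (rule E_abs_sq[OF finP])
  also have "EE (pair_pmf M1 M2) (\<lambda>x. (?X x)^2) = EE M1 (\<lambda>B1. EE M2 (\<lambda>B2. (S B1 B2 / (real N1 * real N2) - m)^2))"
    using E_pair[OF finM1 finM2, of "\<lambda>B1 B2. (S B1 B2 / (real N1 * real N2) - m)^2"]
    by (simp add: split_beta')
  also have "\<dots> = EE M1 (\<lambda>B1. EE M2 (\<lambda>B2. (S B1 B2 - real N1 * real N2 * m)^2)) / (real N1 * real N2)^2"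
  proof -
    have "(\<lambda>B1. EE M2 (\<lambda>B2. (S B1 B2 / (real N1 * real N2) - m)^2)) =
          (\<lambda>B1. EE M2 (\<lambda>B2. (S B1 B2 - real N1 * real N2 * m)^2) / (real N1 * real N2)^2)"
    proof
      fix B1
      have "(\<lambda>B2. (S B1 B2 / (real N1 * real N2) - m)^2) =
            (\<lambda>B2. (S B1 B2 - real N1 * real N2 * m)^2 / (real N1 * real N2)^2)"
        using N by (intro ext) (simp add: field_simps power2_eq_square)
      then show "EE M2 (\<lambda>B2. (S B1 B2 / (real N1 * real N2) - m)^2) =
          EE M2 (\<lambda>B2. (S B1 B2 - real N1 * real N2 * m)^2) / (real N1 * real N2)^2" by simp
    qed
    then show ?thesis by simp
  qed
  also have "\<dots> \<le> (real N2 * real N1 * EE p (\<lambda>w. EE (q w) (\<lambda>u. (h w u)^2))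
    + real N2 * (real N1)^2 * EE p (\<lambda>w. pmf p w * EE (q w) (\<lambda>u. (h w u)^2))
    + (real N2)^2 * real N1 * EE p (\<lambda>w. (EE (q w) (h w))^2)) / (real N1 * real N2)^2"
    unfolding M1_def M2_def S_def m_def
    by (intro divide_right_mono var_total(2)[OF Sa finq hnn]) simp
  also have "\<dots> = EE p (\<lambda>w. EE (q w) (\<lambda>u. (h w u)^2)) / (real N1 * real N2)
    + EE p (\<lambda>w. pmf p w * EE (q w) (\<lambda>u. (h w u)^2)) / real N2
    + EE p (\<lambda>w. (EE (q w) (h w))^2) / real N1"
    using N by (simp add: field_simps power2_eq_square)
  also have "\<dots> \<le> Ka * m / (real N1 * real N2) + Kc * m / real N2 + Kb * m / real N1"
    by (intro add_mono divide_right_mono ha hb hc) auto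
  also have "\<dots> = (Ka / (real N1 * real N2) + Kb / real N1 + Kc / real N2) * m"
    by (simp add: field_simps)
  also have "\<dots> \<le> K * Qv * m"
  proof -
    have "0 \<le> m" unfolding m_def by (intro E_nonneg) (auto intro: hnn)
    then show ?thesis using KK by (intro mult_right_mono) auto
  qed
  finally have "(EE (pair_pmf M1 M2) (\<lambda>x. \<bar>?X x\<bar>))^2 \<le> K * Qv * m" .
  then have "EE (pair_pmf M1 M2) (\<lambda>x. \<bar>?X x\<bar>) \<le> sqrt (K * Qv * m)"
    using real_le_rsqrt by blast
  then show ?thesis by (simp add: split_beta')
qed



lemma abs_aux: "0 \<le> b \<Longrightarrow> 0 \<le> d \<Longrightarrow> \<bar>(a::real) + b - (c + d)\<bar> \<le> \<bar>a - c\<bar> + b + d"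
  by linarith

lemma one_shot:
  fixes p :: "'a pmf" and q :: "'a \<Rightarrow> 'b pmf" and ch :: "'a \<Rightarrow> 'b \<Rightarrow> 'c pmf"
    and A :: "'a \<Rightarrow> 'b \<Rightarrow> 'c \<Rightarrow> bool"
    and N1 N2 :: nat and d1 :: 'a and d2 :: 'b and T1 T2 \<beta> :: real
  assumes Sa: "finite Sa" "set_pmf p \<subseteq> Sa"
    and finq: "\<And>w. finite (set_pmf (q w))"
    and Sc: "finite Sc" "\<And>w u. set_pmf (ch w u) \<subseteq> Sc"
    and N: "N1 > 0" "N2 > 0"
    and T: "0 \<le> T1" "0 \<le> T2" "0 \<le> \<beta>"
    and Q_def: "Q = bind_pmf p (\<lambda>w. bind_pmf (q w) (ch w))"
    and h1: "\<And>w u v. w \<in> set_pmf p \<Longrightarrow> u \<in> set_pmf (q w) \<Longrightarrow> A w u v \<Longrightarrow> pmf (ch w u) v \<le> T1 * pmf Q v"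
    and h2: "\<And>w u v. w \<in> set_pmf p \<Longrightarrow> u \<in> set_pmf (q w) \<Longrightarrow> A w u v \<Longrightarrow> pmf (bind_pmf (q w) (ch w)) v \<le> T2 * pmf Q v"
    and h3: "\<And>w u v. w \<in> set_pmf p \<Longrightarrow> u \<in> set_pmf (q w) \<Longrightarrow> A w u v \<Longrightarrow> pmf p w \<le> \<beta>"
  shows "EE (pair_pmf (Pi_pmf {..<N1} d1 (\<lambda>_. p)) (Pi_pmf (Sa \<times> {..<N2}) d2 (\<lambda>(w,k). q w)))
      (\<lambda>(B1,B2). (1/2) * (\<Sum>v\<in>Sc. \<bar>(\<Sum>j<N1. \<Sum>k<N2. pmf (ch (B1 j) (B2 (B1 j, k))) v) / (real N1 * real N2) - pmf Q v\<bar>))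
    \<le> EE p (\<lambda>w. EE (q w) (\<lambda>u. EE (ch w u) (\<lambda>v. if A w u v then 0 else 1)))
       + (1/2) * sqrt (T1 / (real N1 * real N2) + T2 / real N1 + \<beta> * T1 / real N2)"
proof -
  define M1 where "M1 = Pi_pmf {..<N1} d1 (\<lambda>_. p)"
  define M2 where "M2 = Pi_pmf (Sa \<times> {..<N2}) d2 (\<lambda>(w,k). q w)"
  define K where "K = T1 / (real N1 * real N2) + T2 / real N1 + \<beta> * T1 / real N2"
  define hv where "hv = (\<lambda>v w u. pmf (ch w u) v * (if A w u v then 1 else 0))"
  define gv where "gv = (\<lambda>v w u. pmf (ch w u) v * (if A w u v then 0 else 1))"
  define m where "m = (\<lambda>v. EE p (\<lambda>w. EE (q w) (hv v w)))"
  define m' where "m' = (\<lambda>v. EE p (\<lambda>w. EE (q w) (gv v w)))"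
  define Sv where "Sv = (\<lambda>v B1 B2. \<Sum>j<N1. \<Sum>k<N2. hv v (B1 j) (B2 (B1 j, k)))"
  define Sv' where "Sv' = (\<lambda>v B1 B2. \<Sum>j<N1. \<Sum>k<N2. gv v (B1 j) (B2 (B1 j, k)))"
  have finp: "finite (set_pmf p)" using Sa finite_subset by blast
  have finM1: "finite (set_pmf M1)" unfolding M1_def by (rule finite_set_Pi_pmf) (use finp in auto)
  have finM2: "finite (set_pmf M2)" unfolding M2_def by (rule finite_set_Pi_pmf) (use Sa finq in auto)
  have finP: "finite (set_pmf (pair_pmf M1 M2))" using finM1 finM2 by simp
  have hnn: "0 \<le> hv v w u" for v w u by (simp add: hv_def)
  have gnn: "0 \<le> gv v w u" for v w u by (simp add: gv_def)
  have Kn: "0 \<le> K" unfolding K_def using T by (auto intro!: add_nonneg_nonneg divide_nonneg_nonneg)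
  have Qv: "pmf Q v = m v + m' v" for v
  proof -
    have "pmf Q v = EE p (\<lambda>w. pmf (bind_pmf (q w) (ch w)) v)" by (simp add: Q_def pmf_bind)
    also have "\<dots> = EE p (\<lambda>w. EE (q w) (\<lambda>u. hv v w u + gv v w u))"
      by (intro Bochner_Integration.integral_cong refl) (auto simp: pmf_bind hv_def gv_def intro!: Bochner_Integration.integral_cong)
    also have "\<dots> = EE p (\<lambda>w. EE (q w) (hv v w) + EE (q w) (gv v w))"
      by (intro Bochner_Integration.integral_cong refl E_add finq)
    also have "\<dots> = m v + m' v" unfolding m_def m'_def by (rule E_add[OF finp])
    finally show ?thesis .
  qed
  have mnn: "0 \<le> m v" for v unfolding m_def by (intro E_nonneg) (auto intro: hnn)
  have m'nn: "0 \<le> m' v" for v unfolding m'_def by (intro E_nonneg) (auto intro: gnn)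
  have zero_case: "EE (q w) (hv v w) = 0 \<and> EE (q w) (\<lambda>u. (hv v w u)^2) = 0"
    if "\<not> (\<exists>u\<in>set_pmf (q w). A w u v)" for w v
  proof -
    have "EE (q w) (hv v w) = EE (q w) (\<lambda>_. 0)"
      using that by (intro integral_cong_AE) (auto simp: AE_measure_pmf_iff hv_def)
    moreover have "EE (q w) (\<lambda>u. (hv v w u)^2) = EE (q w) (\<lambda>_. 0)"
      using that by (intro integral_cong_AE) (auto simp: AE_measure_pmf_iff hv_def)
    ultimately show ?thesis by simp
  qed
  have per_v: "EE (pair_pmf M1 M2) (\<lambda>(B1,B2). \<bar>Sv v B1 B2 / (real N1 * real N2) - m v\<bar>) \<le> sqrt (K * pmf Q v * m v)" for v
  proof -
    let ?Qv = "pmf Q v"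
    have ha: "EE p (\<lambda>w. EE (q w) (\<lambda>u. (hv v w u)^2)) \<le> (T1 * ?Qv) * m v"
    proof -
      have "EE p (\<lambda>w. EE (q w) (\<lambda>u. (hv v w u)^2)) \<le> EE p (\<lambda>w. EE (q w) (\<lambda>u. (T1 * ?Qv) * hv v w u))"
      proof (intro E_mono[OF finp] E_mono[OF finq])
        fix w u assume w: "w \<in> set_pmf p" and u: "u \<in> set_pmf (q w)"
        show "(hv v w u)^2 \<le> (T1 * ?Qv) * hv v w u"
        proof (cases "A w u v")
          case True
          then have "hv v w u \<le> T1 * ?Qv" using h1[OF w u True] by (simp add: hv_def)
          then show ?thesis using hnn[of v w u] by (simp add: power2_eq_square mult_right_mono)
        qed (simp add: hv_def)
      qed
      also have "\<dots> = (T1 * ?Qv) * m v" by (simp add: m_def)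
      finally show ?thesis .
    qed
    have hb: "EE p (\<lambda>w. (EE (q w) (hv v w))^2) \<le> (T2 * ?Qv) * m v"
    proof -
      have "EE p (\<lambda>w. (EE (q w) (hv v w))^2) \<le> EE p (\<lambda>w. (T2 * ?Qv) * EE (q w) (hv v w))"
      proof (intro E_mono[OF finp])
        fix w assume w: "w \<in> set_pmf p"
        have gn: "0 \<le> EE (q w) (hv v w)" by (intro E_nonneg hnn)
        show "(EE (q w) (hv v w))^2 \<le> (T2 * ?Qv) * EE (q w) (hv v w)"
        proof (cases "\<exists>u\<in>set_pmf (q w). A w u v")
          case True
          then obtain u where u: "u \<in> set_pmf (q w)" "A w u v" by blast
          have "EE (q w) (hv v w) \<le> EE (q w) (\<lambda>u. pmf (ch w u) v)"
            by (intro E_mono[OF finq]) (simp add: hv_def)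
          also have "\<dots> = pmf (bind_pmf (q w) (ch w)) v" by (simp add: pmf_bind)
          also have "\<dots> \<le> T2 * ?Qv" by (rule h2[OF w u(1,2)])
          finally show ?thesis using gn by (simp add: power2_eq_square mult_right_mono)
        next
          case False
          then show ?thesis using zero_case[OF False] by simp
        qed
      qed
      also have "\<dots> = (T2 * ?Qv) * m v" by (simp add: m_def)
      finally show ?thesis .
    qed
    have hc: "EE p (\<lambda>w. pmf p w * EE (q w) (\<lambda>u. (hv v w u)^2)) \<le> (\<beta> * T1 * ?Qv) * m v"
    proof -
      have "EE p (\<lambda>w. pmf p w * EE (q w) (\<lambda>u. (hv v w u)^2)) \<le> EE p (\<lambda>w. \<beta> * EE (q w) (\<lambda>u. (hv v w u)^2))"
      proof (intro E_mono[OF finp])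
        fix w assume w: "w \<in> set_pmf p"
        have en: "0 \<le> EE (q w) (\<lambda>u. (hv v w u)^2)" by (intro E_nonneg) auto
        show "pmf p w * EE (q w) (\<lambda>u. (hv v w u)^2) \<le> \<beta> * EE (q w) (\<lambda>u. (hv v w u)^2)"
        proof (cases "\<exists>u\<in>set_pmf (q w). A w u v")
          case True
          then obtain u where u: "u \<in> set_pmf (q w)" "A w u v" by blast
          show ?thesis using h3[OF w u] en by (intro mult_right_mono) auto
        next
          case False
          then show ?thesis using zero_case[OF False] by simp
        qed
      qed
      also have "\<dots> = \<beta> * EE p (\<lambda>w. EE (q w) (\<lambda>u. (hv v w u)^2))" by simp
      also have "\<dots> \<le> \<beta> * ((T1 * ?Qv) * m v)" by (intro mult_left_mono ha T)
      finally show ?thesis by (simp add: mult.assoc)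
    qed
    have KK: "(T1 * ?Qv) / (real N1 * real N2) + (T2 * ?Qv) / real N1 + (\<beta> * T1 * ?Qv) / real N2 \<le> K * ?Qv"
      by (simp add: K_def field_simps)
    have mv: "m v = EE p (\<lambda>w. EE (q w) (hv v w))" by (simp add: m_def)
    have hnn': "\<And>w u. 0 \<le> hv v w u" by (rule hnn)
    show ?thesis
      unfolding M1_def M2_def Sv_def
      by (rule one_shot_v[OF Sa finq hnn' N Kn mv ha hb hc KK])
  qed
  have first': "EE (pair_pmf M1 M2) (\<lambda>(B1,B2). Sv' v B1 B2 / (real N1 * real N2)) = m' v" for v
  proof -
    have "EE (pair_pmf M1 M2) (\<lambda>(B1,B2). Sv' v B1 B2 / (real N1 * real N2)) =
          EE M1 (\<lambda>B1. EE M2 (\<lambda>B2. Sv' v B1 B2 / (real N1 * real N2)))"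
      by (rule E_pair[OF finM1 finM2])
    also have "\<dots> = EE M1 (\<lambda>B1. EE M2 (Sv' v B1)) / (real N1 * real N2)"
      by simp
    also have "EE M1 (\<lambda>B1. EE M2 (Sv' v B1)) = real N1 * real N2 * m' v"
      unfolding M1_def M2_def Sv'_def m'_def by (rule var_total(1)[OF Sa finq gnn])
    finally show ?thesis using N by simp
  qed
  have pw: "(1/2) * (\<Sum>v\<in>Sc. \<bar>(\<Sum>j<N1. \<Sum>k<N2. pmf (ch (B1 j) (B2 (B1 j, k))) v) / (real N1 * real N2) - pmf Q v\<bar>)
     \<le> (1/2) * (\<Sum>v\<in>Sc. \<bar>Sv v B1 B2 / (real N1 * real N2) - m v\<bar> + Sv' v B1 B2 / (real N1 * real N2) + m' v)" for B1 B2
  proof -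
    have "\<bar>(\<Sum>j<N1. \<Sum>k<N2. pmf (ch (B1 j) (B2 (B1 j, k))) v) / (real N1 * real N2) - pmf Q v\<bar>
       \<le> \<bar>Sv v B1 B2 / (real N1 * real N2) - m v\<bar> + Sv' v B1 B2 / (real N1 * real N2) + m' v" for v
    proof -
      have eq: "(\<Sum>j<N1. \<Sum>k<N2. pmf (ch (B1 j) (B2 (B1 j, k))) v) = Sv v B1 B2 + Sv' v B1 B2"
        unfolding Sv_def Sv'_def sum.distrib[symmetric] by (intro sum.cong refl) (simp add: hv_def gv_def)
      have "0 \<le> Sv' v B1 B2" unfolding Sv'_def by (intro sum_nonneg gnn)
      then have "0 \<le> Sv' v B1 B2 / (real N1 * real N2)" by simp
      then show ?thesis unfolding eq Qv add_divide_distrib using m'nn[of v] by (rule abs_aux)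
    qed
    then show ?thesis by (intro mult_left_mono sum_mono) auto
  qed
  have "EE (pair_pmf M1 M2) (\<lambda>(B1,B2). (1/2) * (\<Sum>v\<in>Sc. \<bar>(\<Sum>j<N1. \<Sum>k<N2. pmf (ch (B1 j) (B2 (B1 j, k))) v) / (real N1 * real N2) - pmf Q v\<bar>))
     \<le> EE (pair_pmf M1 M2) (\<lambda>(B1,B2). (1/2) * (\<Sum>v\<in>Sc. \<bar>Sv v B1 B2 / (real N1 * real N2) - m v\<bar> + Sv' v B1 B2 / (real N1 * real N2) + m' v))"
    by (intro E_mono[OF finP]) (use pw in \<open>auto simp: split_beta'\<close>)
  also have "\<dots> = (1/2) * (\<Sum>v\<in>Sc. EE (pair_pmf M1 M2) (\<lambda>(B1,B2). \<bar>Sv v B1 B2 / (real N1 * real N2) - m v\<bar>)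
        + EE (pair_pmf M1 M2) (\<lambda>(B1,B2). Sv' v B1 B2 / (real N1 * real N2)) + m' v)"
  proof -
    have "EE (pair_pmf M1 M2) (\<lambda>(B1,B2). (1/2) * (\<Sum>v\<in>Sc. \<bar>Sv v B1 B2 / (real N1 * real N2) - m v\<bar> + Sv' v B1 B2 / (real N1 * real N2) + m' v))
      = (1/2) * EE (pair_pmf M1 M2) (\<lambda>x. \<Sum>v\<in>Sc. (\<lambda>(B1,B2). \<bar>Sv v B1 B2 / (real N1 * real N2) - m v\<bar>) x + (\<lambda>(B1,B2). Sv' v B1 B2 / (real N1 * real N2)) x + m' v)"
      by (simp add: split_beta')
    also have "\<dots> = (1/2) * (\<Sum>v\<in>Sc. EE (pair_pmf M1 M2) (\<lambda>x. (\<lambda>(B1,B2). \<bar>Sv v B1 B2 / (real N1 * real N2) - m v\<bar>) x + (\<lambda>(B1,B2). Sv' v B1 B2 / (real N1 * real N2)) x + m' v))"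
      by (subst E_sum[OF finP]) simp
    also have "\<dots> = (1/2) * (\<Sum>v\<in>Sc. EE (pair_pmf M1 M2) (\<lambda>(B1,B2). \<bar>Sv v B1 B2 / (real N1 * real N2) - m v\<bar>)
        + EE (pair_pmf M1 M2) (\<lambda>(B1,B2). Sv' v B1 B2 / (real N1 * real N2)) + m' v)"
      by (simp add: E_add[OF finP])
    finally show ?thesis .
  qed
  also have "\<dots> \<le> (1/2) * (\<Sum>v\<in>Sc. sqrt (K * pmf Q v * m v) + m' v + m' v)"
    by (intro mult_left_mono sum_mono add_mono per_v) (auto simp: first')
  also have "\<dots> = (1/2) * (\<Sum>v\<in>Sc. sqrt (K * pmf Q v * m v)) + (\<Sum>v\<in>Sc. m' v)"
    by (simp add: sum.distrib sum_distrib_left[symmetric] sum_distrib_right[symmetric] algebra_simps)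
  also have "(\<Sum>v\<in>Sc. m' v) = EE p (\<lambda>w. EE (q w) (\<lambda>u. EE (ch w u) (\<lambda>v. if A w u v then 0 else 1)))"
  proof -
    have "(\<Sum>v\<in>Sc. m' v) = EE p (\<lambda>w. \<Sum>v\<in>Sc. EE (q w) (gv v w))"
      unfolding m'_def by (rule E_sum[OF finp, symmetric])
    also have "\<dots> = EE p (\<lambda>w. EE (q w) (\<lambda>u. \<Sum>v\<in>Sc. gv v w u))"
      by (intro Bochner_Integration.integral_cong refl E_sum[OF finq, symmetric])
    also have "\<dots> = EE p (\<lambda>w. EE (q w) (\<lambda>u. EE (ch w u) (\<lambda>v. if A w u v then 0 else 1)))"
      by (intro Bochner_Integration.integral_cong refl, subst E_fin[OF Sc(1) Sc(2)]) (simp add: gv_def)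
    finally show ?thesis .
  qed
  also have "(\<Sum>v\<in>Sc. sqrt (K * pmf Q v * m v)) \<le> sqrt K"
  proof -
    have "(\<Sum>v\<in>Sc. sqrt (K * pmf Q v * m v)) \<le> sqrt (\<Sum>v\<in>Sc. K * pmf Q v) * sqrt (\<Sum>v\<in>Sc. m v)"
      using sqrt_sum_CS[of Sc "\<lambda>v. K * pmf Q v" m] Kn mnn by (simp add: mult.assoc)
    also have "(\<Sum>v\<in>Sc. K * pmf Q v) = K"
    proof -
      have "set_pmf Q \<subseteq> Sc" using Sc(2) by (auto simp: Q_def)
      then show ?thesis by (simp add: sum_distrib_left[symmetric] sum_pmf_eq_1[OF Sc(1)])
    qed
    also have "sqrt (\<Sum>v\<in>Sc. m v) \<le> 1"
    proof -
      have "set_pmf Q \<subseteq> Sc" using Sc(2) by (auto simp: Q_def)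
      have "(\<Sum>v\<in>Sc. m v) \<le> (\<Sum>v\<in>Sc. pmf Q v)" using m'nn by (intro sum_mono) (simp add: Qv)
      also have "\<dots> = 1" using \<open>set_pmf Q \<subseteq> Sc\<close> by (rule sum_pmf_eq_1[OF Sc(1)])
      finally show ?thesis by simp
    qed
    finally show ?thesis using Kn by (simp add: mult_left_mono)
  qed
  finally show ?thesis unfolding M1_def[symmetric] M2_def[symmetric] K_def[symmetric] by simp
qed



lemma exists_mgf_lt1:
  fixes r :: "'x::finite pmf" and g :: "'x \<Rightarrow> real"
  assumes "EE r g < a"
  shows "\<exists>l>0. (\<Sum>x\<in>UNIV. pmf r x * exp (l * (g x - a))) < 1"
proof -
  define \<psi> where "\<psi> = (\<lambda>l. \<Sum>x\<in>UNIV. pmf r x * exp (l * (g x - a)))"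
  have "(\<psi> has_real_derivative (\<Sum>x\<in>UNIV. pmf r x * (g x - a))) (at 0)"
    unfolding \<psi>_def
    by (rule DERIV_sum) (auto intro!: derivative_eq_intros)
  moreover have "(\<Sum>x\<in>UNIV. pmf r x * (g x - a)) < 0"
  proof -
    have "(\<Sum>x\<in>UNIV. pmf r x * (g x - a)) = (\<Sum>x\<in>UNIV. pmf r x * g x) - a * (\<Sum>x\<in>UNIV. pmf r x)"
      by (simp add: algebra_simps sum_subtractf sum_distrib_left)
    also have "(\<Sum>x\<in>UNIV. pmf r x) = 1" by (rule sum_pmf_eq_1) auto
    also have "(\<Sum>x\<in>UNIV. pmf r x * g x) = EE r g" by (rule E_fin[symmetric]) auto
    finally show ?thesis using assms by simp
  qed
  ultimately obtain d where d: "d > 0" "\<forall>h>0. h < d \<longrightarrow> \<psi> (0 + h) < \<psi> 0"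
    using DERIV_neg_dec_right by blast
  have "\<psi> 0 = 1" unfolding \<psi>_def by (simp add: sum_pmf_eq_1)
  then have "\<psi> (d/2) < 1" using d by auto
  then show ?thesis using d by (intro exI[of _ "d/2"]) (auto simp: \<psi>_def)
qed

lemma chernoff_iid:
  fixes r :: "'x::finite pmf" and g :: "'x \<Rightarrow> real"
  assumes "EE r g < a"
  shows "\<exists>\<phi>. 0 \<le> \<phi> \<and> \<phi> < 1 \<and> (\<forall>n. EE (Pi_pmf {..<n} dd (\<lambda>_. r))
            (\<lambda>x. if (\<Sum>t<n. g (x t)) > real n * a then 1 else 0) \<le> \<phi> ^ n)"
proof -
  obtain l where l: "l > 0" "(\<Sum>x\<in>UNIV. pmf r x * exp (l * (g x - a))) < 1"
    using exists_mgf_lt1[OF assms] by blast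
  define \<phi> where "\<phi> = (\<Sum>x\<in>UNIV. pmf r x * exp (l * (g x - a)))"
  have \<phi>nn: "0 \<le> \<phi>" unfolding \<phi>_def by (intro sum_nonneg) auto
  have Er: "EE r (\<lambda>y. exp (l * (g y - a))) = \<phi>" unfolding \<phi>_def by (rule E_fin) auto
  have "EE (Pi_pmf {..<n} dd (\<lambda>_. r)) (\<lambda>x. if (\<Sum>t<n. g (x t)) > real n * a then 1 else 0) \<le> \<phi> ^ n" for n
  proof -
    have fin: "finite (set_pmf (Pi_pmf {..<n} dd (\<lambda>_. r)))" by (rule finite_set_Pi_pmf) auto
    have "EE (Pi_pmf {..<n} dd (\<lambda>_. r)) (\<lambda>x. if (\<Sum>t<n. g (x t)) > real n * a then 1 else 0)
        \<le> EE (Pi_pmf {..<n} dd (\<lambda>_. r)) (\<lambda>x. \<Prod>t<n. exp (l * (g (x t) - a)))"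
    proof (rule E_mono[OF fin])
      fix x
      have "(\<Prod>t<n. exp (l * (g (x t) - a))) = exp (l * ((\<Sum>t<n. g (x t)) - real n * a))"
        by (simp add: exp_sum[symmetric] sum_distrib_left[symmetric] sum_subtractf)
      moreover have "(if (\<Sum>t<n. g (x t)) > real n * a then 1 else 0) \<le> exp (l * ((\<Sum>t<n. g (x t)) - real n * a))"
        using l(1) by (auto intro: one_le_exp_iff[THEN iffD2])
      ultimately show "(if (\<Sum>t<n. g (x t)) > real n * a then 1 else 0) \<le> (\<Prod>t<n. exp (l * (g (x t) - a)))"
        by simp
    qed
    also have "\<dots> = (\<Prod>t<n. EE r (\<lambda>y. exp (l * (g y - a))))"
      by (rule expectation_prod_Pi_pmf) (auto intro: integrable_measure_pmf_finite)
    also have "\<dots> = \<phi> ^ n" by (simp add: Er)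
    finally show ?thesis .
  qed
  then show ?thesis using \<phi>nn l(2) by (intro exI[of _ \<phi>]) (auto simp: \<phi>_def)
qed



lemma pmf_bind_Pair:
  "pmf (bind_pmf M (\<lambda>x. map_pmf (Pair x) (K x))) (a, b) = pmf M a * pmf (K a) b"
proof -
  have "pmf (bind_pmf M (\<lambda>x. map_pmf (Pair x) (K x))) (a, b) = EE M (\<lambda>x. pmf (map_pmf (Pair x) (K x)) (a, b))"
    by (simp add: pmf_bind)
  also have "\<dots> = EE M (\<lambda>x. indicator {a} x * pmf (K a) b)"
  proof (intro Bochner_Integration.integral_cong refl)
    fix x
    show "pmf (map_pmf (Pair x) (K x)) (a, b) = indicator {a} x * pmf (K a) b"
    proof (cases "x = a")
      case True
      then show ?thesis using pmf_map_inj'[of "Pair a" "K a" b] by (simp add: inj_on_def)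
    next
      case False
      then have "(a, b) \<notin> set_pmf (map_pmf (Pair x) (K x))" by auto
      then show ?thesis using False by (simp add: set_pmf_eq)
    qed
  qed
  also have "\<dots> = pmf M a * pmf (K a) b"
    by (simp add: measure_pmf_single)
  finally show ?thesis .
qed

lemma joint_alt:
  "joint_WUV PW PUW PV = bind_pmf PW (\<lambda>w. map_pmf (Pair w) (bind_pmf (PUW w) (\<lambda>u. map_pmf (Pair u) (PV w u))))"
  unfolding joint_WUV_def by (simp add: map_pmf_def bind_assoc_pmf bind_return_pmf)

lemma pmf_joint:
  "pmf (joint_WUV PW PUW PV) (w, u, v) = pmf PW w * pmf (PUW w) u * pmf (PV w u) v"
  unfolding joint_alt by (simp add: pmf_bind_Pair)

lemma margV_alt:
  "marg_V PW PUW PV = bind_pmf PW (\<lambda>w. bind_pmf (PUW w) (PV w))"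
  unfolding marg_V_def joint_WUV_def
  by (simp add: map_pmf_def bind_assoc_pmf bind_return_pmf bind_return_pmf')

lemma map_WU_V:
  "map_pmf (\<lambda>(w, u, v). ((w, u), v)) (joint_WUV PW PUW PV) =
     bind_pmf PW (\<lambda>w. bind_pmf (PUW w) (\<lambda>u. map_pmf (Pair (w, u)) (PV w u)))"
  unfolding joint_WUV_def
  by (simp add: map_pmf_def bind_assoc_pmf bind_return_pmf)

lemma map_WU:
  "map_pmf fst (map_pmf (\<lambda>(w, u, v). ((w, u), v)) (joint_WUV PW PUW PV)) =
     bind_pmf PW (\<lambda>w. map_pmf (Pair w) (PUW w))"
  unfolding joint_WUV_def
  by (simp add: map_pmf_def bind_assoc_pmf bind_return_pmf bind_return_pmf')

lemma map_WU_snd: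
  "map_pmf snd (map_pmf (\<lambda>(w, u, v). ((w, u), v)) (joint_WUV PW PUW PV)) = marg_V PW PUW PV"
  unfolding marg_V_def pmf.map_comp by (intro pmf.map_cong) auto

lemma map_W_V:
  "map_pmf (\<lambda>(w, u, v). (w, v)) (joint_WUV PW PUW PV) =
     bind_pmf PW (\<lambda>w. map_pmf (Pair w) (bind_pmf (PUW w) (PV w)))"
  unfolding joint_WUV_def
  by (simp add: map_pmf_def bind_assoc_pmf bind_return_pmf)

lemma map_W_V_fst:
  "map_pmf fst (map_pmf (\<lambda>(w, u, v). (w, v)) (joint_WUV PW PUW PV)) = PW"
  unfolding joint_WUV_def
  by (simp add: map_pmf_def bind_assoc_pmf bind_return_pmf bind_return_pmf')

lemma map_W_V_snd:
  "map_pmf snd (map_pmf (\<lambda>(w, u, v). (w, v)) (joint_WUV PW PUW PV)) = marg_V PW PUW PV"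
  unfolding marg_V_def pmf.map_comp by (intro pmf.map_cong) auto



lemma sum_UNIV_prod:
  "(\<Sum>x\<in>(UNIV::('a::finite \<times> 'b::finite) set). f x) = (\<Sum>a\<in>UNIV. \<Sum>b\<in>UNIV. f (a, b))"
  by (simp add: UNIV_Times_UNIV[symmetric] sum.cartesian_product del: UNIV_Times_UNIV)

lemma pmf_sum1: "(\<Sum>x\<in>(UNIV::'a::finite set). pmf p x) = 1"
  by (rule sum_pmf_eq_1) auto

lemma pmf_Wb:
  fixes PUW :: "'w \<Rightarrow> 'u::finite pmf"
  shows "pmf (bind_pmf (PUW w) (PV w)) v = (\<Sum>u\<in>UNIV. pmf (PUW w) u * pmf (PV w u) v)"
  by (simp add: pmf_bind E_fin[of UNIV])

lemma pmf_margV: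
  fixes PW :: "'w::finite pmf" and PUW :: "'w \<Rightarrow> 'u::finite pmf"
  shows "pmf (marg_V PW PUW PV) v = (\<Sum>w\<in>UNIV. pmf PW w * pmf (bind_pmf (PUW w) (PV w)) v)"
  by (simp add: margV_alt pmf_bind E_fin[of UNIV])

lemma margV_ge_Wb:
  fixes PW :: "'w::finite pmf" and PUW :: "'w \<Rightarrow> 'u::finite pmf"
  shows "pmf PW w * pmf (bind_pmf (PUW w) (PV w)) v \<le> pmf (marg_V PW PUW PV) v"
  unfolding pmf_margV by (rule member_le_sum) auto

lemma margV_ge_J:
  fixes PW :: "'w::finite pmf" and PUW :: "'w \<Rightarrow> 'u::finite pmf"
  shows "pmf PW w * pmf (PUW w) u * pmf (PV w u) v \<le> pmf (marg_V PW PUW PV) v"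
proof -
  have "pmf (PUW w) u * pmf (PV w u) v \<le> pmf (bind_pmf (PUW w) (PV w)) v"
    unfolding pmf_Wb by (rule member_le_sum[where f = "\<lambda>u. pmf (PUW w) u * pmf (PV w u) v"]) auto
  then have "pmf PW w * pmf (PUW w) u * pmf (PV w u) v \<le> pmf PW w * pmf (bind_pmf (PUW w) (PV w)) v"
    by (simp add: mult.assoc mult_left_mono)
  then show ?thesis using margV_ge_Wb[of PW w PUW PV v] by linarith
qed

lemma E_joint:
  fixes PW :: "'w::finite pmf" and PUW :: "'w \<Rightarrow> 'u::finite pmf" and PV :: "'w \<Rightarrow> 'u \<Rightarrow> 'v::finite pmf"
  shows "EE (joint_WUV PW PUW PV) f = (\<Sum>w\<in>UNIV. \<Sum>u\<in>UNIV. \<Sum>v\<in>UNIV. pmf PW w * pmf (PUW w) u * pmf (PV w u) v * f (w, u, v))"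
  by (simp add: E_fin[of UNIV] sum_UNIV_prod pmf_joint)

lemma info1:
  fixes PW :: "'w::finite pmf" and PUW :: "'w \<Rightarrow> 'u::finite pmf" and PV :: "'w \<Rightarrow> 'u \<Rightarrow> 'v::finite pmf"
  shows "mutual_info_bits (map_pmf (\<lambda>(w, u, v). ((w, u), v)) (joint_WUV PW PUW PV)) =
     EE (joint_WUV PW PUW PV) (\<lambda>(w, u, v). log 2 (pmf (PV w u) v / pmf (marg_V PW PUW PV) v))"
proof -
  let ?Q = "marg_V PW PUW PV"
  have pj: "pmf (map_pmf (\<lambda>(w, u, v). ((w, u), v)) (joint_WUV PW PUW PV)) ((w, u), v) = pmf PW w * pmf (PUW w) u * pmf (PV w u) v" for w u v
  proof -
    have "pmf (map_pmf (\<lambda>(w, u, v). ((w, u), v)) (joint_WUV PW PUW PV)) ((\<lambda>(w, u, v). ((w, u), v)) (w, u, v)) =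
        pmf (joint_WUV PW PUW PV) (w, u, v)"
      by (rule pmf_map_inj') (auto simp: inj_on_def)
    then show ?thesis by (simp add: pmf_joint)
  qed
  have pfst: "pmf (map_pmf fst (map_pmf (\<lambda>(w, u, v). ((w, u), v)) (joint_WUV PW PUW PV))) (w, u) = pmf PW w * pmf (PUW w) u" for w u
    by (simp add: map_WU pmf_bind_Pair)
  show ?thesis
    unfolding mutual_info_bits_def E_joint sum_UNIV_prod[of "\<lambda>xy. _ xy"]
    apply (simp add: sum_UNIV_prod pj pfst map_WU_snd)
    apply (intro sum.cong refl)
    apply (rename_tac w u v)
    apply (case_tac "pmf PW w * pmf (PUW w) u * pmf (PV w u) v = 0")
     apply simp
    apply (simp add: field_simps)
    done
qed

lemma info2:
  fixes PW :: "'w::finite pmf" and PUW :: "'w \<Rightarrow> 'u::finite pmf" and PV :: "'w \<Rightarrow> 'u \<Rightarrow> 'v::finite pmf"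
  shows "mutual_info_bits (map_pmf (\<lambda>(w, u, v). (w, v)) (joint_WUV PW PUW PV)) =
     EE (joint_WUV PW PUW PV) (\<lambda>(w, u, v). log 2 (pmf (bind_pmf (PUW w) (PV w)) v / pmf (marg_V PW PUW PV) v))"
proof -
  let ?Wb = "\<lambda>w. bind_pmf (PUW w) (PV w)"
  have pj: "pmf (map_pmf (\<lambda>(w, u, v). (w, v)) (joint_WUV PW PUW PV)) (w, v) = pmf PW w * pmf (?Wb w) v" for w v
    by (simp add: map_W_V pmf_bind_Pair)
  have lhs: "mutual_info_bits (map_pmf (\<lambda>(w, u, v). (w, v)) (joint_WUV PW PUW PV)) =
     (\<Sum>w\<in>UNIV. \<Sum>v\<in>UNIV. pmf PW w * pmf (?Wb w) v * log 2 (pmf (?Wb w) v / pmf (marg_V PW PUW PV) v))"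
    unfolding mutual_info_bits_def
    apply (simp add: sum_UNIV_prod pj map_W_V_fst map_W_V_snd)
    apply (intro sum.cong refl)
    apply (rename_tac w v)
    apply (case_tac "pmf PW w * pmf (?Wb w) v = 0")
     apply simp
    apply (simp add: field_simps)
    done
  have rhs: "EE (joint_WUV PW PUW PV) (\<lambda>(w, u, v). log 2 (pmf (?Wb w) v / pmf (marg_V PW PUW PV) v)) =
     (\<Sum>w\<in>UNIV. \<Sum>v\<in>UNIV. pmf PW w * pmf (?Wb w) v * log 2 (pmf (?Wb w) v / pmf (marg_V PW PUW PV) v))"
  proof -
    have "EE (joint_WUV PW PUW PV) (\<lambda>(w, u, v). log 2 (pmf (?Wb w) v / pmf (marg_V PW PUW PV) v)) =
      (\<Sum>w\<in>UNIV. \<Sum>u\<in>UNIV. \<Sum>v\<in>UNIV. pmf PW w * pmf (PUW w) u * pmf (PV w u) v * log 2 (pmf (?Wb w) v / pmf (marg_V PW PUW PV) v))"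
      by (simp add: E_joint)
    also have "\<dots> = (\<Sum>w\<in>UNIV. \<Sum>v\<in>UNIV. \<Sum>u\<in>UNIV. pmf PW w * pmf (PUW w) u * pmf (PV w u) v * log 2 (pmf (?Wb w) v / pmf (marg_V PW PUW PV) v))"
      by (intro sum.cong refl sum.swap)
    also have "\<dots> = (\<Sum>w\<in>UNIV. \<Sum>v\<in>UNIV. pmf PW w * pmf (?Wb w) v * log 2 (pmf (?Wb w) v / pmf (marg_V PW PUW PV) v))"
      by (intro sum.cong refl) (simp add: pmf_Wb sum_distrib_left sum_distrib_right mult.assoc)
    finally show ?thesis .
  qed
  show ?thesis using lhs rhs by simp
qed

lemma info3:
  fixes PW :: "'w::finite pmf" and PUW :: "'w \<Rightarrow> 'u::finite pmf" and PV :: "'w \<Rightarrow> 'u \<Rightarrow> 'v::finite pmf"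
  shows "- entropy_bits PW = EE (joint_WUV PW PUW PV) (\<lambda>(w, u, v). log 2 (pmf PW w))"
proof -
  have "EE (joint_WUV PW PUW PV) (\<lambda>(w, u, v). log 2 (pmf PW w)) =
     (\<Sum>w\<in>UNIV. \<Sum>u\<in>UNIV. \<Sum>v\<in>UNIV. pmf PW w * pmf (PUW w) u * pmf (PV w u) v * log 2 (pmf PW w))"
    by (simp add: E_joint)
  also have "\<dots> = (\<Sum>w\<in>UNIV. pmf PW w * log 2 (pmf PW w) * (\<Sum>u\<in>UNIV. pmf (PUW w) u * (\<Sum>v\<in>UNIV. pmf (PV w u) v)))"
    by (simp add: sum_distrib_left sum_distrib_right mult_ac)
  also have "\<dots> = (\<Sum>w\<in>UNIV. pmf PW w * log 2 (pmf PW w))"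
    by (simp add: pmf_sum1)
  finally show ?thesis by (simp add: entropy_bits_def)
qed



lemma finite_seqs: "finite (seqs n :: (nat \<Rightarrow> 'a::finite) set)"
  unfolding seqs_def by (rule finite_PiE) auto

lemma set_prod_seq: "set_pmf (prod_seq n f) \<subseteq> seqs n"
  unfolding prod_seq_def seqs_def
  by (subst set_Pi_pmf) (auto simp: PiE_dflt_def PiE_def extensional_def)

lemma set_prod_seq': "x \<in> set_pmf (prod_seq n f) \<Longrightarrow> t < n \<Longrightarrow> x t \<in> set_pmf (f t)"
  unfolding prod_seq_def by (subst (asm) set_Pi_pmf) (auto simp: PiE_dflt_def)

lemma finite_set_prod_seq: "finite (set_pmf (prod_seq n (f :: nat \<Rightarrow> 'a::finite pmf)))"
  using set_prod_seq finite_seqs finite_subset by blast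

lemma pmf_prod_seq:
  "pmf (prod_seq n f) x = (if x \<in> seqs n then (\<Prod>t<n. pmf (f t) (x t)) else 0)"
  unfolding prod_seq_def seqs_def
  by (subst pmf_Pi) (auto simp: PiE_def extensional_def)

lemma Q_seq:
  "prod_seq n (\<lambda>_. marg_V PW PUW PV) =
     bind_pmf (prod_seq n (\<lambda>_. PW)) (\<lambda>w. bind_pmf (prod_seq n (\<lambda>t. PUW (w t))) (\<lambda>u. prod_seq n (\<lambda>t. PV (w t) (u t))))"
  unfolding prod_seq_def margV_alt
  by (simp add: Pi_pmf_bind[where d' = undefined])

lemma Wb_seq:
  "bind_pmf (prod_seq n (\<lambda>t. PUW (w t))) (\<lambda>u. prod_seq n (\<lambda>t. PV (w t) (u t))) =
     prod_seq n (\<lambda>t. bind_pmf (PUW (w t)) (PV (w t)))"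
  unfolding prod_seq_def
  by (simp add: Pi_pmf_bind[where d' = undefined])

definition zip3 :: "nat \<Rightarrow> (nat \<Rightarrow> 'a) \<Rightarrow> (nat \<Rightarrow> 'b) \<Rightarrow> (nat \<Rightarrow> 'c) \<Rightarrow> nat \<Rightarrow> 'a \<times> 'b \<times> 'c" where
  "zip3 n w u v = (\<lambda>t. if t \<in> {..<n} then (w t, u t, v t) else undefined)"

lemma joint_seq:
  "Pi_pmf {..<n} undefined (\<lambda>_. joint_WUV PW PUW PV) =
     bind_pmf (prod_seq n (\<lambda>_. PW)) (\<lambda>w. bind_pmf (prod_seq n (\<lambda>t. PUW (w t)))
        (\<lambda>u. map_pmf (zip3 n w u) (prod_seq n (\<lambda>t. PV (w t) (u t)))))"
  unfolding prod_seq_def joint_WUV_def zip3_def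
  by (simp add: Pi_pmf_bind[where d' = undefined] map_pmf_def)

lemma cb_size_pos: "cb_size R n > 0"
  unfolding cb_size_def by simp

lemma pmf_induced:
  "pmf (induced_V PV R1 R2 n B1 B2) v =
     (\<Sum>j<cb_size R1 n. \<Sum>k<cb_size R2 n. pmf (prod_seq n (\<lambda>t. PV (B1 j t) (B2 (B1 j, k) t))) v)
       / (real (cb_size R1 n) * real (cb_size R2 n))"
proof -
  have n1: "{..<cb_size R1 n} \<noteq> {}" "{..<cb_size R2 n} \<noteq> {}" using cb_size_pos by auto
  show ?thesis
    unfolding induced_V_def Let_def
    by (simp add: pmf_bind integral_pmf_of_set[OF n1(1)] integral_pmf_of_set[OF n1(2)] sum_divide_distrib mult.commute)
qed



lemma prod_le_powr:
  fixes x y :: "nat \<Rightarrow> real"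
  assumes "\<And>t. t < n \<Longrightarrow> 0 < x t" "\<And>t. t < n \<Longrightarrow> 0 < y t" "(\<Sum>t<n. log 2 (x t / y t)) \<le> c"
  shows "(\<Prod>t<n. x t) \<le> 2 powr c * (\<Prod>t<n. y t)"
proof -
  have "(\<Prod>t<n. x t) = (\<Prod>t<n. 2 powr (log 2 (x t / y t)) * y t)"
  proof (intro prod.cong refl)
    fix t assume "t \<in> {..<n}"
    then have "0 < x t" "0 < y t" using assms by auto
    then show "x t = 2 powr log 2 (x t / y t) * y t" by simp
  qed
  also have "\<dots> = 2 powr (\<Sum>t<n. log 2 (x t / y t)) * (\<Prod>t<n. y t)"
    by (simp add: prod.distrib powr_sum)
  also have "\<dots> \<le> 2 powr c * (\<Prod>t<n. y t)"
    using assms by (intro mult_right_mono prod_nonneg) (auto simp: less_imp_le)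
  finally show ?thesis .
qed

lemma bound_n:
  fixes PW :: "'w::finite pmf" and PUW :: "'w \<Rightarrow> 'u::finite pmf" and PV :: "'w \<Rightarrow> 'u \<Rightarrow> 'v::finite pmf"
    and R1 R2 a1 a2 a3 :: real and n :: nat
  defines "\<Phi> \<equiv> marg_V PW PUW PV"
  defines "g1 \<equiv> (\<lambda>(w, u, v). log 2 (pmf (PV w u) v / pmf \<Phi> v))"
  defines "g2 \<equiv> (\<lambda>(w, u, v). log 2 (pmf (bind_pmf (PUW w) (PV w)) v / pmf \<Phi> v))"
  defines "g3 \<equiv> (\<lambda>(w::'w, u::'u, v::'v). log 2 (pmf PW w))"
  defines "Jn \<equiv> Pi_pmf {..<n} undefined (\<lambda>_. joint_WUV PW PUW PV)"
  defines "N1 \<equiv> cb_size R1 n" and "N2 \<equiv> cb_size R2 n"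
  shows "expected_tv PW PUW PV R1 R2 n \<le>
      EE Jn (\<lambda>x. if (\<Sum>t<n. g1 (x t)) > real n * a1 then 1 else 0)
    + EE Jn (\<lambda>x. if (\<Sum>t<n. g2 (x t)) > real n * a2 then 1 else 0)
    + EE Jn (\<lambda>x. if (\<Sum>t<n. g3 (x t)) > real n * a3 then 1 else 0)
    + (1/2) * sqrt (2 powr (real n * a1) / (real N1 * real N2) + 2 powr (real n * a2) / real N1
         + 2 powr (real n * a3) * 2 powr (real n * a1) / real N2)"
proof -
  define p where "p = prod_seq n (\<lambda>_. PW)"
  define q where "q = (\<lambda>w. prod_seq n (\<lambda>t. PUW (w t)))"
  define ch where "ch = (\<lambda>w u. prod_seq n (\<lambda>t. PV (w t) (u t)))"
  define Q where "Q = prod_seq n (\<lambda>_. \<Phi>)"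
  define A' where "A' = (\<lambda>x. (\<Sum>t<n. g1 (x t)) \<le> real n * a1 \<and> (\<Sum>t<n. g2 (x t)) \<le> real n * a2 \<and> (\<Sum>t<n. g3 (x t)) \<le> real n * a3)"
  define A where "A = (\<lambda>w u v. A' (zip3 n w u v))"
  define T1 where "T1 = 2 powr (real n * a1)"
  define T2 where "T2 = 2 powr (real n * a2)"
  define \<beta> where "\<beta> = 2 powr (real n * a3)"
  have Qeq: "Q = bind_pmf p (\<lambda>w. bind_pmf (q w) (ch w))"
    unfolding Q_def p_def q_def ch_def \<Phi>_def by (rule Q_seq)
  have N: "N1 > 0" "N2 > 0" unfolding N1_def N2_def by (auto intro: cb_size_pos)
  have sumzip: "(\<Sum>t<n. g (zip3 n w u v t)) = (\<Sum>t<n. g (w t, u t, v t))" for g :: "'w \<times> 'u \<times> 'v \<Rightarrow> real" and w u v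
    by (intro sum.cong refl) (simp add: zip3_def)
  have wpos: "0 < pmf PW (w t)" if "w \<in> set_pmf p" "t < n" for w t
    using set_prod_seq'[OF that[unfolded p_def]] by (simp add: pmf_positive)
  have upos: "0 < pmf (PUW (w t)) (u t)" if "u \<in> set_pmf (q w)" "t < n" for w u t
    using set_prod_seq'[OF that[unfolded q_def]] by (simp add: pmf_positive)
  have wseq: "w \<in> seqs n" if "w \<in> set_pmf p" for w using that set_prod_seq unfolding p_def by blast
  have main: "EE (pair_pmf (Pi_pmf {..<N1} undefined (\<lambda>_. p)) (Pi_pmf (seqs n \<times> {..<N2}) undefined (\<lambda>(w,k). q w)))
      (\<lambda>(B1,B2). (1/2) * (\<Sum>v\<in>seqs n. \<bar>(\<Sum>j<N1. \<Sum>k<N2. pmf (ch (B1 j) (B2 (B1 j, k))) v) / (real N1 * real N2) - pmf Q v\<bar>))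
    \<le> EE p (\<lambda>w. EE (q w) (\<lambda>u. EE (ch w u) (\<lambda>v. if A w u v then 0 else 1)))
       + (1/2) * sqrt (T1 / (real N1 * real N2) + T2 / real N1 + \<beta> * T1 / real N2)"
  proof (rule one_shot[OF finite_seqs _ _ finite_seqs _ N _ _ _ Qeq])
    show "set_pmf p \<subseteq> seqs n" unfolding p_def by (rule set_prod_seq)
    show "finite (set_pmf (q w))" for w unfolding q_def by (rule finite_set_prod_seq)
    show "set_pmf (ch w u) \<subseteq> seqs n" for w u unfolding ch_def by (rule set_prod_seq)
    show "0 \<le> T1" "0 \<le> T2" "0 \<le> \<beta>" by (auto simp: T1_def T2_def \<beta>_def)
  next
    fix w u v assume w: "w \<in> set_pmf p" and u: "u \<in> set_pmf (q w)" and Av: "A w u v"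
    have A1: "(\<Sum>t<n. log 2 (pmf (PV (w t) (u t)) (v t) / pmf \<Phi> (v t))) \<le> real n * a1"
      using Av by (simp add: A_def A'_def sumzip g1_def)
    have A2: "(\<Sum>t<n. log 2 (pmf (bind_pmf (PUW (w t)) (PV (w t))) (v t) / pmf \<Phi> (v t))) \<le> real n * a2"
      using Av by (simp add: A_def A'_def sumzip g2_def)
    have A3: "(\<Sum>t<n. log 2 (pmf PW (w t))) \<le> real n * a3"
      using Av by (simp add: A_def A'_def sumzip g3_def)
    show "pmf (ch w u) v \<le> T1 * pmf Q v"
    proof (cases "v \<in> seqs n \<and> (\<forall>t<n. 0 < pmf (PV (w t) (u t)) (v t))")
      case True
      have Phipos: "0 < pmf \<Phi> (v t)" if "t < n" for t
      proof -
        have "0 < pmf PW (w t) * pmf (PUW (w t)) (u t) * pmf (PV (w t) (u t)) (v t)"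
          using wpos[OF w that] upos[OF u that] True that by auto
        also have "\<dots> \<le> pmf \<Phi> (v t)" unfolding \<Phi>_def by (rule margV_ge_J)
        finally show ?thesis .
      qed
      have "(\<Prod>t<n. pmf (PV (w t) (u t)) (v t)) \<le> 2 powr (real n * a1) * (\<Prod>t<n. pmf \<Phi> (v t))"
        by (rule prod_le_powr[OF _ Phipos A1]) (use True in auto)
      then show ?thesis using True by (simp add: ch_def Q_def pmf_prod_seq T1_def)
    next
      case False
      have "pmf (ch w u) v = 0"
      proof (cases "v \<in> seqs n")
        case False then show ?thesis by (simp add: ch_def pmf_prod_seq)
      next
        case True
        with \<open>\<not> (v \<in> seqs n \<and> (\<forall>t<n. 0 < pmf (PV (w t) (u t)) (v t)))\<close>
        have "\<not> (\<forall>t<n. 0 < pmf (PV (w t) (u t)) (v t))" by blast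
        then obtain t where t0: "t < n" "\<not> 0 < pmf (PV (w t) (u t)) (v t)" by blast
        have "pmf (PV (w t) (u t)) (v t) = 0" using t0(2) by (simp add: pmf_nonneg order.antisym not_less)
        note t0 = t0(1) this
        from t0 show ?thesis by (simp add: ch_def pmf_prod_seq) (auto intro!: prod_zero)
      qed
      then show ?thesis by (simp add: T1_def)
    qed
  next
    fix w u v assume w: "w \<in> set_pmf p" and u: "u \<in> set_pmf (q w)" and Av: "A w u v"
    have A2: "(\<Sum>t<n. log 2 (pmf (bind_pmf (PUW (w t)) (PV (w t))) (v t) / pmf \<Phi> (v t))) \<le> real n * a2"
      using Av by (simp add: A_def A'_def sumzip g2_def)
    have Wbeq: "bind_pmf (q w) (ch w) = prod_seq n (\<lambda>t. bind_pmf (PUW (w t)) (PV (w t)))"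
      unfolding q_def ch_def by (rule Wb_seq)
    show "pmf (bind_pmf (q w) (ch w)) v \<le> T2 * pmf Q v"
    proof (cases "v \<in> seqs n \<and> (\<forall>t<n. 0 < pmf (bind_pmf (PUW (w t)) (PV (w t))) (v t))")
      case True
      have Phipos: "0 < pmf \<Phi> (v t)" if "t < n" for t
      proof -
        have "0 < pmf PW (w t) * pmf (bind_pmf (PUW (w t)) (PV (w t))) (v t)"
          using wpos[OF w that] True that by auto
        also have "\<dots> \<le> pmf \<Phi> (v t)" unfolding \<Phi>_def by (rule margV_ge_Wb)
        finally show ?thesis .
      qed
      have "(\<Prod>t<n. pmf (bind_pmf (PUW (w t)) (PV (w t))) (v t)) \<le> 2 powr (real n * a2) * (\<Prod>t<n. pmf \<Phi> (v t))"
        by (rule prod_le_powr[OF _ Phipos A2]) (use True in auto)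
      then show ?thesis using True by (simp add: Wbeq Q_def pmf_prod_seq T2_def)
    next
      case False
      have "pmf (bind_pmf (q w) (ch w)) v = 0"
      proof (cases "v \<in> seqs n")
        case False then show ?thesis by (simp add: Wbeq pmf_prod_seq)
      next
        case True
        with \<open>\<not> (v \<in> seqs n \<and> (\<forall>t<n. 0 < pmf (bind_pmf (PUW (w t)) (PV (w t))) (v t)))\<close>
        have "\<not> (\<forall>t<n. 0 < pmf (bind_pmf (PUW (w t)) (PV (w t))) (v t))" by blast
        then obtain t where t0: "t < n" "\<not> 0 < pmf (bind_pmf (PUW (w t)) (PV (w t))) (v t)" by blast
        have "pmf (bind_pmf (PUW (w t)) (PV (w t))) (v t) = 0" using t0(2) by (simp add: pmf_nonneg order.antisym not_less)
        note t0 = t0(1) this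
        from t0 show ?thesis by (simp add: Wbeq pmf_prod_seq) (auto intro!: prod_zero)
      qed
      then show ?thesis by (simp add: T2_def)
    qed
  next
    fix w u v assume w: "w \<in> set_pmf p" and u: "u \<in> set_pmf (q w)" and Av: "A w u v"
    have A3: "(\<Sum>t<n. log 2 (pmf PW (w t) / 1)) \<le> real n * a3"
      using Av by (simp add: A_def A'_def sumzip g3_def)
    have "(\<Prod>t<n. pmf PW (w t)) \<le> 2 powr (real n * a3) * (\<Prod>t<n. 1)"
      by (rule prod_le_powr[OF _ _ A3]) (use wpos[OF w] in auto)
    then show "pmf p w \<le> \<beta>" using wseq[OF w] by (simp add: p_def pmf_prod_seq \<beta>_def)
  qed
  have lhs: "expected_tv PW PUW PV R1 R2 n =
     EE (pair_pmf (Pi_pmf {..<N1} undefined (\<lambda>_. p)) (Pi_pmf (seqs n \<times> {..<N2}) undefined (\<lambda>(w,k). q w)))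
      (\<lambda>(B1,B2). (1/2) * (\<Sum>v\<in>seqs n. \<bar>(\<Sum>j<N1. \<Sum>k<N2. pmf (ch (B1 j) (B2 (B1 j, k))) v) / (real N1 * real N2) - pmf Q v\<bar>))"
    unfolding expected_tv_def codebook1_dist_def codebook2_dist_def tv_seq_def
    by (simp add: pmf_induced p_def q_def ch_def Q_def N1_def N2_def \<Phi>_def)
  have finJ: "finite (set_pmf Jn)" unfolding Jn_def by (rule finite_set_Pi_pmf) auto
  have bad: "EE p (\<lambda>w. EE (q w) (\<lambda>u. EE (ch w u) (\<lambda>v. if A w u v then 0 else 1)))
      = EE Jn (\<lambda>x. if A' x then 0 else 1)"
  proof -
    have "Jn = bind_pmf p (\<lambda>w. bind_pmf (q w) (\<lambda>u. map_pmf (zip3 n w u) (ch w u)))"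
      unfolding Jn_def p_def q_def ch_def by (rule joint_seq)
    then have "EE Jn (\<lambda>x. if A' x then 0 else 1) =
       EE p (\<lambda>w. EE (bind_pmf (q w) (\<lambda>u. map_pmf (zip3 n w u) (ch w u))) (\<lambda>x. if A' x then 0 else 1))"
      by (simp, intro E_bind[of "seqs n"]) (auto simp: finite_seqs p_def set_prod_seq q_def ch_def finite_set_prod_seq)
    also have "\<dots> = EE p (\<lambda>w. EE (q w) (\<lambda>u. EE (map_pmf (zip3 n w u) (ch w u)) (\<lambda>x. if A' x then 0 else 1)))"
      by (intro Bochner_Integration.integral_cong refl E_bind[of "seqs n"])
         (auto simp: finite_seqs set_prod_seq q_def ch_def finite_set_prod_seq)
    also have "\<dots> = EE p (\<lambda>w. EE (q w) (\<lambda>u. EE (ch w u) (\<lambda>v. if A w u v then 0 else 1)))"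
      by (simp add: A_def)
    finally show ?thesis by simp
  qed
  have bad2: "EE Jn (\<lambda>x. if A' x then 0 else 1) \<le>
      EE Jn (\<lambda>x. if (\<Sum>t<n. g1 (x t)) > real n * a1 then 1 else 0)
    + EE Jn (\<lambda>x. if (\<Sum>t<n. g2 (x t)) > real n * a2 then 1 else 0)
    + EE Jn (\<lambda>x. if (\<Sum>t<n. g3 (x t)) > real n * a3 then 1 else 0)"
  proof -
    have "EE Jn (\<lambda>x. if A' x then 0 else 1) \<le> EE Jn (\<lambda>x.
        (if (\<Sum>t<n. g1 (x t)) > real n * a1 then 1 else 0)
      + (if (\<Sum>t<n. g2 (x t)) > real n * a2 then 1 else 0)
      + (if (\<Sum>t<n. g3 (x t)) > real n * a3 then 1 else 0))"
      by (intro E_mono[OF finJ]) (auto simp: A'_def)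
    also have "\<dots> = EE Jn (\<lambda>x. if (\<Sum>t<n. g1 (x t)) > real n * a1 then 1 else 0)
    + EE Jn (\<lambda>x. if (\<Sum>t<n. g2 (x t)) > real n * a2 then 1 else 0)
    + EE Jn (\<lambda>x. if (\<Sum>t<n. g3 (x t)) > real n * a3 then 1 else 0)"
      by (simp add: E_add[OF finJ])
    finally show ?thesis .
  qed
  show ?thesis
    using main bad bad2 unfolding lhs by (simp add: T1_def T2_def \<beta>_def)
qed



lemma exp_term_bound:
  fixes a R :: real and N :: nat and n :: nat
  assumes "2 powr (real n * R) \<le> real N" "a - R \<le> - d"
  shows "2 powr (real n * a) / real N \<le> 2 powr (- d * real n)"
proof -
  have pos: "0 < 2 powr (real n * R)" by simp
  have "2 powr (real n * a) / real N \<le> 2 powr (real n * a) / 2 powr (real n * R)"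
  proof (rule divide_left_mono[OF assms(1)])
    show "0 \<le> 2 powr (real n * a)" by simp
    have "0 < real N" using pos assms(1) by linarith
    then show "0 < real N * 2 powr (real n * R)" using pos by simp
  qed
  also have "\<dots> = 2 powr (real n * (a - R))" by (simp add: powr_diff[symmetric] algebra_simps)
  also have "\<dots> \<le> 2 powr (- d * real n)"
  proof (intro powr_mono)
    show "real n * (a - R) \<le> - d * real n"
      using mult_left_mono[OF assms(2), of "real n"] by (simp add: algebra_simps)
  qed simp
  finally show ?thesis .
qed

theorem mainTheorem16:
  fixes PW :: "'w::finite pmf" and PUW :: "'w \<Rightarrow> 'u::finite pmf"
    and PV :: "'w \<Rightarrow> 'u \<Rightarrow> 'v::finite pmf" and R1 R2 :: real
  assumes "R1 > mutual_info_bits (map_pmf (\<lambda>(w, u, v). (w, v)) (joint_WUV PW PUW PV))"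
    and "R2 > mutual_info_bits (map_pmf (\<lambda>(w, u, v). ((w, u), v)) (joint_WUV PW PUW PV))
              - entropy_bits PW"
    and "R1 + R2 > mutual_info_bits (map_pmf (\<lambda>(w, u, v). ((w, u), v)) (joint_WUV PW PUW PV))"
  shows "(\<lambda>n. expected_tv PW PUW PV R1 R2 n) \<longlonglongrightarrow> 0 \<and>
         (\<exists>\<gamma>>0. \<exists>C. \<forall>n. expected_tv PW PUW PV R1 R2 n \<le> C * 2 powr (- \<gamma> * real n))"
proof -
  define J where "J = joint_WUV PW PUW PV"
  define \<Phi> where "\<Phi> = marg_V PW PUW PV"
  define I1 where "I1 = mutual_info_bits (map_pmf (\<lambda>(w, u, v). ((w, u), v)) J)"
  define I2 where "I2 = mutual_info_bits (map_pmf (\<lambda>(w, u, v). (w, v)) J)"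
  define H where "H = entropy_bits PW"
  define \<delta> where "\<delta> = min (R1 - I2) (min (R2 - (I1 - H)) (R1 + R2 - I1)) / 3"
  have \<delta>: "\<delta> > 0" using assms by (simp add: \<delta>_def I1_def I2_def H_def J_def)
  have d1: "R1 - I2 \<ge> 3 * \<delta>" and d2: "R2 - (I1 - H) \<ge> 3 * \<delta>" and d3: "R1 + R2 - I1 \<ge> 3 * \<delta>"
    by (auto simp: \<delta>_def)
  define a1 where "a1 = I1 + \<delta>"
  define a2 where "a2 = I2 + \<delta>"
  define a3 where "a3 = - H + \<delta>"
  define g1 where "g1 = (\<lambda>(w, u, v). log 2 (pmf (PV w u) v / pmf \<Phi> v))"
  define g2 where "g2 = (\<lambda>(w, u::'u, v). log 2 (pmf (bind_pmf (PUW w) (PV w)) v / pmf \<Phi> v))"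
  define g3 where "g3 = (\<lambda>(w::'w, u::'u, v::'v). log 2 (pmf PW w))"
  have e1: "EE J g1 < a1" using \<delta> info1[of PW PUW PV] by (simp add: a1_def I1_def J_def g1_def \<Phi>_def)
  have e2: "EE J g2 < a2" using \<delta> info2[of PW PUW PV] by (simp add: a2_def I2_def J_def g2_def \<Phi>_def)
  have e3: "EE J g3 < a3" using \<delta> info3[of PW PUW PV] by (simp add: a3_def H_def J_def g3_def)
  obtain \<phi>1 where \<phi>1: "0 \<le> \<phi>1" "\<phi>1 < 1" "\<And>n. EE (Pi_pmf {..<n} undefined (\<lambda>_. J))
            (\<lambda>x. if (\<Sum>t<n. g1 (x t)) > real n * a1 then 1 else 0) \<le> \<phi>1 ^ n"
    using chernoff_iid[OF e1, of undefined] by blast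
  obtain \<phi>2 where \<phi>2: "0 \<le> \<phi>2" "\<phi>2 < 1" "\<And>n. EE (Pi_pmf {..<n} undefined (\<lambda>_. J))
            (\<lambda>x. if (\<Sum>t<n. g2 (x t)) > real n * a2 then 1 else 0) \<le> \<phi>2 ^ n"
    using chernoff_iid[OF e2, of undefined] by blast
  obtain \<phi>3 where \<phi>3: "0 \<le> \<phi>3" "\<phi>3 < 1" "\<And>n. EE (Pi_pmf {..<n} undefined (\<lambda>_. J))
            (\<lambda>x. if (\<Sum>t<n. g3 (x t)) > real n * a3 then 1 else 0) \<le> \<phi>3 ^ n"
    using chernoff_iid[OF e3, of undefined] by blast
  define \<rho>0 where "\<rho>0 = 2 powr (- \<delta>)"
  have "2 powr (- \<delta>) < 2 powr 0" by (rule powr_less_mono) (use \<delta> in auto)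
  then have \<rho>0: "0 < \<rho>0" "\<rho>0 < 1" by (auto simp: \<rho>0_def)
  define \<sigma> where "\<sigma> = sqrt \<rho>0"
  have \<sigma>: "0 < \<sigma>" "\<sigma> < 1" using \<rho>0 by (auto simp: \<sigma>_def)
  define \<rho> where "\<rho> = max (max \<phi>1 \<phi>2) (max \<phi>3 \<sigma>)"
  have \<rho>: "0 < \<rho>" "\<rho> < 1" using \<sigma> \<phi>1 \<phi>2 \<phi>3 by (auto simp: \<rho>_def)
  have pw_n: "2 powr (- \<delta> * real n) = \<rho>0 ^ n" for n
    by (simp add: \<rho>0_def powr_realpow[symmetric] powr_powr)
  have bound: "expected_tv PW PUW PV R1 R2 n \<le> 4 * \<rho> ^ n" for n
  proof -
    define N1 where "N1 = cb_size R1 n"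
    define N2 where "N2 = cb_size R2 n"
    have N1ge: "2 powr (real n * R1) \<le> real N1" unfolding N1_def cb_size_def by (rule real_nat_ceiling_ge)
    have N2ge: "2 powr (real n * R2) \<le> real N2" unfolding N2_def cb_size_def by (rule real_nat_ceiling_ge)
    have N12: "2 powr (real n * (R1 + R2)) \<le> real N1 * real N2"
    proof -
      have "2 powr (real n * (R1 + R2)) = 2 powr (real n * R1) * 2 powr (real n * R2)"
        by (simp add: powr_add[symmetric] algebra_simps)
      also have "\<dots> \<le> real N1 * real N2" by (intro mult_mono N1ge N2ge) auto
      finally show ?thesis .
    qed
    have t1: "2 powr (real n * a1) / (real N1 * real N2) \<le> 2 powr (- \<delta> * real n)"
      using exp_term_bound[of n "R1 + R2" "N1 * N2" a1 \<delta>] N12 d3 \<delta> by (simp add: a1_def)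
    have t2: "2 powr (real n * a2) / real N1 \<le> 2 powr (- \<delta> * real n)"
      using exp_term_bound[of n R1 N1 a2 \<delta>] N1ge d1 \<delta> by (simp add: a2_def)
    have t3: "2 powr (real n * a3) * 2 powr (real n * a1) / real N2 \<le> 2 powr (- \<delta> * real n)"
    proof -
      have "2 powr (real n * a3) * 2 powr (real n * a1) = 2 powr (real n * (a3 + a1))"
        by (simp add: powr_add[symmetric] algebra_simps)
      moreover have "2 powr (real n * (a3 + a1)) / real N2 \<le> 2 powr (- \<delta> * real n)"
        using exp_term_bound[of n R2 N2 "a3 + a1" \<delta>] N2ge d2 \<delta> by (simp add: a1_def a3_def)
      ultimately show ?thesis by simp
    qed
    define K where "K = 2 powr (real n * a1) / (real N1 * real N2) + 2 powr (real n * a2) / real N1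
         + 2 powr (real n * a3) * 2 powr (real n * a1) / real N2"
    have "K \<le> 3 * \<rho>0 ^ n" using t1 t2 t3 unfolding K_def pw_n by simp
    then have "sqrt K \<le> sqrt (3 * \<rho>0 ^ n)" by simp
    also have "\<dots> = sqrt 3 * \<sigma> ^ n" by (simp add: \<sigma>_def real_sqrt_mult real_sqrt_power)
    also have "\<dots> \<le> 2 * \<sigma> ^ n"
    proof -
      have "sqrt 3 \<le> 2" by (rule real_le_lsqrt) auto
      then show ?thesis using \<sigma> by (intro mult_right_mono) auto
    qed
    finally have sK: "(1/2) * sqrt K \<le> \<sigma> ^ n" by simp
    have "expected_tv PW PUW PV R1 R2 n \<le> \<phi>1 ^ n + \<phi>2 ^ n + \<phi>3 ^ n + (1/2) * sqrt K"
      using bound_n[of PW PUW PV R1 R2 n a1 a2 a3] \<phi>1(3)[of n] \<phi>2(3)[of n] \<phi>3(3)[of n]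
      unfolding K_def N1_def N2_def J_def g1_def g2_def g3_def \<Phi>_def by linarith
    also have "\<dots> \<le> \<rho> ^ n + \<rho> ^ n + \<rho> ^ n + \<rho> ^ n"
      using \<phi>1 \<phi>2 \<phi>3 \<sigma> sK
      by (intro add_mono power_mono order.trans[OF sK]) (auto simp: \<rho>_def)
    finally show ?thesis by simp
  qed
  define \<gamma> where "\<gamma> = - log 2 \<rho>"
  have \<gamma>: "\<gamma> > 0" using \<rho> by (simp add: \<gamma>_def)
  have rho_n: "\<rho> ^ n = 2 powr (- \<gamma> * real n)" for n
  proof -
    have "\<rho> ^ n = \<rho> powr real n" using \<rho> by (simp add: powr_realpow)
    also have "\<dots> = (2 powr (log 2 \<rho>)) powr real n" using \<rho> by simp
    also have "\<dots> = 2 powr (- \<gamma> * real n)" by (simp add: powr_powr \<gamma>_def)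
    finally show ?thesis .
  qed
  have nonneg: "0 \<le> expected_tv PW PUW PV R1 R2 n" for n
    unfolding expected_tv_def tv_seq_def by (intro E_nonneg) (auto intro!: sum_nonneg)
  have lim: "(\<lambda>n. expected_tv PW PUW PV R1 R2 n) \<longlonglongrightarrow> 0"
  proof (rule Lim_null_comparison)
    show "\<forall>\<^sub>F n in sequentially. norm (expected_tv PW PUW PV R1 R2 n) \<le> 4 * \<rho> ^ n"
      using bound nonneg by simp
    show "(\<lambda>n. 4 * \<rho> ^ n) \<longlonglongrightarrow> 0"
      using \<rho> by (intro tendsto_mult_right_zero LIMSEQ_power_zero) auto
  qed
  have "\<forall>n. expected_tv PW PUW PV R1 R2 n \<le> 4 * 2 powr (- \<gamma> * real n)"
    using bound by (simp add: rho_n)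
  then have "\<exists>\<gamma>>0. \<exists>C. \<forall>n. expected_tv PW PUW PV R1 R2 n \<le> C * 2 powr (- \<gamma> * real n)"
    using \<gamma> by blast
  then show ?thesis using lim by blast
qed

end
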